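(* Let $q\ge 3$, $s\in\mathbb{N}$, and let $Y_s=\{y_i\}_{i=1}^{2s}$ be any collection of points with $y_{2s}<\cdots<y_1<y_{2s}+2\pi=:y_0$. Then there exists a function $f\in\Delta^{(q)}(Y_s)\cap W^{q-1}$ such that $$nE_n^{(q)}(f,Y_s)\ge C(q,Y_s),\qquad n\in\mathbb{N},$$ where $C(q,Y_s)>0$ depends only on $q$ and $Y_s$.
   Context: A function $f\in C[a,b]$ is called $q$-monotone ($q\ge 2$) if $f\in C^{q-2}(a,b)$ and $f^{(q-2)}$ is convex on $(a,b)$. For $Y_s$ as in the claim, $\Delta^{(q)}(Y_s)$ denotes the set of continuous $2\pi$-periodic functions $f:\mathbb{R}\to\mathbb{R}$ such that $(-1)^{i-1}f$ is $q$-monotone on $[y_i,y_{i-1}]$ for each $1\le i\le 2s$. For $r\in\mathbb{N}$, $W^r$ denotes the class of $2\pi$-periodic functions $f$ with $f^{(r-1)}$ locally absolutely continuous on $\mathbb{R}$ and $\operatorname{ess\,sup}_{x\in\mathbb{R}}|f^{(r)}(x)|\le 2$. $\mathcal{T}_n$ is the space of real trigonometric polynomials of degree $\le n$. For a continuous $2\pi$-periodic $g$, $\|g\|=\max_{x\in\mathbb{R}}|g(x)|$, and $E_n^{(q)}(g,Y_s):=\inf_{T_n\in\mathcal{T}_n\cap\Delta^{(q)}(Y_s)}\|g-T_n\|$. *)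

theory Defs
  imports "HOL-Analysis.Analysis"
begin

definition deriv_chain :: "nat \<Rightarrow> (nat \<Rightarrow> real \<Rightarrow> real) \<Rightarrow> (real \<Rightarrow> real) \<Rightarrow> real set \<Rightarrow> bool" where
  "deriv_chain k g f I \<longleftrightarrow> g 0 = f \<and>
     (\<forall>j<k. \<forall>x\<in>I. (g j has_real_derivative g (Suc j) x) (at x))"

definition Ck_on :: "nat \<Rightarrow> (real \<Rightarrow> real) \<Rightarrow> real set \<Rightarrow> bool" where
  "Ck_on k f I \<longleftrightarrow> (\<exists>g. deriv_chain k g f I \<and> (\<forall>j\<le>k. continuous_on I (g j)))"

definition q_monotone :: "nat \<Rightarrow> (real \<Rightarrow> real) \<Rightarrow> real \<Rightarrow> real \<Rightarrow> bool" where
  "q_monotone q f a b \<longleftrightarrow> continuous_on {a..b} f \<and>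
     (\<exists>g. deriv_chain (q - 2) g f {a<..<b} \<and> (\<forall>j\<le>q-2. continuous_on {a<..<b} (g j))
          \<and> convex_on {a<..<b} (g (q - 2)))"

definition periodic2pi :: "(real \<Rightarrow> real) \<Rightarrow> bool" where
  "periodic2pi f \<longleftrightarrow> (\<forall>x. f (x + 2 * pi) = f x)"

text \<open>Delta^(q)(Y_s), with the points y 0 > y 1 > ... > y (2s).\<close>
definition Delta_q :: "nat \<Rightarrow> nat \<Rightarrow> (nat \<Rightarrow> real) \<Rightarrow> (real \<Rightarrow> real) set" where
  "Delta_q q s y = {f. continuous_on UNIV f \<and> periodic2pi f \<and>
     (\<forall>i. 1 \<le> i \<and> i \<le> 2 * s \<longrightarrow> q_monotone q (\<lambda>x. (-1) ^ (i - 1) * f x) (y i) (y (i - 1)))}"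

definition abs_cont_on :: "(real \<Rightarrow> real) \<Rightarrow> real \<Rightarrow> real \<Rightarrow> bool" where
  "abs_cont_on g a b \<longleftrightarrow> (\<forall>e>0. \<exists>d>0. \<forall>(m::nat) (u::nat\<Rightarrow>real) (v::nat\<Rightarrow>real).
      (\<forall>k<m. a \<le> u k \<and> u k < v k \<and> v k \<le> b) \<and> (\<forall>k l. k < l \<and> l < m \<longrightarrow> v k \<le> u l) \<and>
      (\<Sum>k<m. v k - u k) < d \<longrightarrow> (\<Sum>k<m. \<bar>g (v k) - g (u k)\<bar>) < e)"

definition loc_abs_cont :: "(real \<Rightarrow> real) \<Rightarrow> bool" where
  "loc_abs_cont g \<longleftrightarrow> (\<forall>a b. a \<le> b \<longrightarrow> abs_cont_on g a b)"

definition W_class :: "nat \<Rightarrow> (real \<Rightarrow> real) set" where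
  "W_class r = {f. periodic2pi f \<and>
     (\<exists>g. deriv_chain (r - 1) g f UNIV \<and> loc_abs_cont (g (r - 1)) \<and>
        (AE x in lborel. \<exists>D. (g (r - 1) has_real_derivative D) (at x) \<and> \<bar>D\<bar> \<le> 2))}"

definition trig_poly :: "nat \<Rightarrow> (real \<Rightarrow> real) \<Rightarrow> bool" where
  "trig_poly n T \<longleftrightarrow> (\<exists>a b :: nat \<Rightarrow> real. \<forall>x.
      T x = a 0 + (\<Sum>k=1..n. a k * cos (real k * x) + b k * sin (real k * x)))"

definition supnorm :: "(real \<Rightarrow> real) \<Rightarrow> real" where
  "supnorm g = (SUP x. \<bar>g x\<bar>)"

definition E_nq :: "nat \<Rightarrow> nat \<Rightarrow> nat \<Rightarrow> (nat \<Rightarrow> real) \<Rightarrow> (real \<Rightarrow> real) \<Rightarrow> real" where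
  "E_nq n q s y g = Inf {supnorm (\<lambda>x. g x - T x) | T. trig_poly n T \<and> T \<in> Delta_q q s y}"

end

theory Submission
  imports Defs
begin

fun teval :: "(real \<times> real \<times> real) list \<Rightarrow> real \<Rightarrow> real" where
  "teval [] x = 0"
| "teval ((w,A,c)#r) x = A * cos (w * x + c) + teval r x"

fun tder :: "(real \<times> real \<times> real) list \<Rightarrow> (real \<times> real \<times> real) list" where
  "tder [] = []"
| "tder ((w,A,c)#r) = (w, A*w, c + pi/2) # tder r"

fun tmul1 :: "real \<times> real \<times> real \<Rightarrow> (real \<times> real \<times> real) list \<Rightarrow> (real \<times> real \<times> real) list" where
  "tmul1 p [] = []"
| "tmul1 (w,A,c) ((v,B,d)#r) = (w+v, A*B/2, c+d) # (w-v, A*B/2, c-d) # tmul1 (w,A,c) r"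

fun tmul :: "(real \<times> real \<times> real) list \<Rightarrow> (real \<times> real \<times> real) list \<Rightarrow> (real \<times> real \<times> real) list" where
  "tmul [] ys = []"
| "tmul (p#r) ys = tmul1 p ys @ tmul r ys"

lemma teval_append: "teval (xs @ ys) x = teval xs x + teval ys x"
  proof (induction xs)
  case (Cons p xs) thus ?case by (cases p) auto
qed simp

lemma teval_tmul1: "teval (tmul1 (w,A,c) ys) x = A * cos (w*x+c) * teval ys x"
proof (induction ys)
  case Nil thus ?case by simp
next
  case (Cons p ys)
  obtain u B d where p: "p = (u,B,d)" by (cases p) auto
  have cc: "A*B/2 * cos (a + b) + (A*B/2 * cos (a - b) + R) = A * cos a * (B * cos b) + R" for a b R :: real
    by (simp add: cos_add cos_diff algebra_simps)
  have "teval (tmul1 (w,A,c) (p#ys)) x = A*B/2 * cos ((w*x+c) + (u*x+d)) + (A*B/2 * cos ((w*x+c) - (u*x+d)) + teval (tmul1 (w,A,c) ys) x)"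
    by (simp add: p algebra_simps)
  also have "\<dots> = A * cos (w*x+c) * (B * cos (u*x+d)) + teval (tmul1 (w,A,c) ys) x"
    by (rule cc)
  finally show ?case using Cons p by (simp add: algebra_simps)
qed

lemma teval_tmul: "teval (tmul xs ys) x = teval xs x * teval ys x"
proof (induction xs)
  case Nil thus ?case by simp
next
  case (Cons p xs)
  obtain w A c where p: "p = (w,A,c)" by (cases p) auto
  show ?case using Cons p by (simp add: teval_append teval_tmul1 algebra_simps)
qed

lemma teval_deriv: "(teval ts has_real_derivative teval (tder ts) x) (at x)"
proof (induction ts)
  case Nil thus ?case by simp
next
  case (Cons p ts)
  obtain w A c where p: "p = (w,A,c)" by (cases p) auto
  have "((\<lambda>x. A * cos (w * x + c)) has_real_derivative A * (- sin (w*x+c) * w)) (at x)"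
    by (intro derivative_eq_intros) auto
  moreover have "A * (- sin (w*x+c) * w) = A * w * cos (w * x + (c + pi/2))"
  proof -
    have "cos (t + pi/2) = - sin t" for t :: real by (simp add: cos_add)
    from this[of "w*x+c"] show ?thesis by (simp add: add.assoc)
  qed
  ultimately show ?case using Cons p
    by (auto intro!: DERIV_add)
qed

lemma teval_cont: "continuous_on S (teval ts)"
  by (meson DERIV_isCont continuous_at_imp_continuous_on teval_deriv)

lemma tder_pow_freq: "map fst ((tder ^^ j) ts) = map fst ts"
proof (induction j)
  case 0 thus ?case by simp
next
  case (Suc j)
  have "map fst (tder l) = map fst l" for l by (induction l rule: tder.induct) auto
  thus ?case using Suc by simp
qed


lemma cos_int_period: "cos (of_int m * (t + 2*pi) + c) = cos (of_int m * t + c)"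
proof -
  have "of_int m * (t + 2*pi) + c = (of_int m * t + c) + (2*pi) * of_int m" by (simp add: algebra_simps)
  thus ?thesis by (simp only: cos_add sin_int_2pin cos_int_2pin) simp
qed

lemma sin_int_period: "sin (of_int m * (t + 2*pi) + c) = sin (of_int m * t + c)"
proof -
  have "of_int m * (t + 2*pi) + c = (of_int m * t + c) + (2*pi) * of_int m" by (simp add: algebra_simps)
  thus ?thesis by (simp only: sin_add sin_int_2pin cos_int_2pin) simp
qed

lemma hi_cos: "((\<lambda>t. cos (of_int m * t + d)) has_integral (if m = 0 then 2*pi*cos d else 0)) {a..a+2*pi}"
proof (cases "m = 0")
  case True
  then show ?thesis using has_integral_const_real[of "cos d" a "a+2*pi"] by simp
next
  case False
  have "((\<lambda>t. cos (of_int m * t + d)) has_integral (sin (of_int m * (a+2*pi) + d)/of_int m - sin (of_int m * a + d)/of_int m)) {a..a+2*pi}"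
  proof (rule fundamental_theorem_of_calculus)
    show "((\<lambda>t. sin (of_int m * t + d) / of_int m) has_vector_derivative cos (of_int m * t + d)) (at t within {a..a+2*pi})" for t
      using False unfolding has_real_derivative_iff_has_vector_derivative[symmetric]
      by (intro derivative_eq_intros) auto
  qed auto
  then show ?thesis using False by (simp add: sin_int_period)
qed

definition Dk :: "nat \<Rightarrow> real \<Rightarrow> real" where
  "Dk n u = 1 + 2 * (\<Sum>m=1..n. cos (real m * u))"

lemma hi_term:
  fixes k :: int
  assumes "\<bar>k\<bar> \<le> int n"
  shows "((\<lambda>t. A * cos (of_int k * t + c) * Dk n (x - t)) has_integral (2*pi*(A * cos (of_int k * x + c)))) {a..a+2*pi}"
proof -
  have prod: "cos (of_int k * t + c) * cos (real m * (x - t)) =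
     (cos (of_int (k - int m) * t + (c + real m * x)) + cos (of_int (k + int m) * t + (c - real m * x)))/2" for t m
  proof -
    have "cos p * cos r = (cos (p - r) + cos (p + r))/2" for p r :: real by (simp add: cos_add cos_diff)
    from this[of "of_int k * t + c" "real m * (x - t)"] show ?thesis by (simp add: algebra_simps)
  qed
  define J where "J m = ((if k - int m = 0 then 2*pi*cos (c + real m * x) else 0) + (if k + int m = 0 then 2*pi*cos (c - real m * x) else 0))/2" for m :: nat
  have hm: "((\<lambda>t. cos (of_int k * t + c) * cos (real m * (x - t))) has_integral J m) {a..a+2*pi}" for m
    unfolding prod J_def
    by (intro has_integral_divide has_integral_add hi_cos)
  have hs: "((\<lambda>t. \<Sum>m=1..n. cos (of_int k * t + c) * cos (real m * (x - t))) has_integral (\<Sum>m=1..n. J m)) {a..a+2*pi}"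
    by (intro has_integral_sum hm) auto
  have sumJ: "(\<Sum>m=1..n. J m) = (if k = 0 then 0 else pi * cos (of_int k * x + c))"
  proof (cases "k = 0")
    case True
    then have "J m = 0" if "m \<in> {1..n}" for m using that by (auto simp: J_def)
    then show ?thesis using True by simp
  next
    case False
    show ?thesis
    proof (cases "k > 0")
      case True
      have "J m = (if m = nat k then pi * cos (of_int k * x + c) else 0)" if "m \<in> {1..n}" for m
        using that True by (auto simp: J_def algebra_simps)
      then have "(\<Sum>m=1..n. J m) = (\<Sum>m=1..n. (if m = nat k then pi * cos (of_int k * x + c) else 0))"
        by (intro sum.cong) auto
      also have "\<dots> = pi * cos (of_int k * x + c)"
      proof -
        have "nat k \<in> {1..n}" using True assms by auto
        thus ?thesis by (simp add: sum.delta)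
      qed
      finally show ?thesis using True by simp
    next
      case False2: False
      have "J m = (if m = nat (-k) then pi * cos (of_int k * x + c) else 0)" if "m \<in> {1..n}" for m
        using that False False2 by (auto simp: J_def algebra_simps)
      then have "(\<Sum>m=1..n. J m) = (\<Sum>m=1..n. (if m = nat (-k) then pi * cos (of_int k * x + c) else 0))"
        by (intro sum.cong) auto
      also have "\<dots> = pi * cos (of_int k * x + c)"
      proof -
        have "nat (-k) \<in> {1..n}" using False False2 assms by auto
        thus ?thesis by (simp add: sum.delta)
      qed
      finally show ?thesis using False by simp
    qed
  qed
  have h0: "((\<lambda>t. cos (of_int k * t + c)) has_integral (if k = 0 then 2*pi*cos c else 0)) {a..a+2*pi}"
    by (rule hi_cos)
  have hI: "((\<lambda>t. A * (cos (of_int k * t + c) + 2 * (\<Sum>m=1..n. cos (of_int k * t + c) * cos (real m * (x - t)))))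
        has_integral A * ((if k = 0 then 2*pi*cos c else 0) + 2 * (\<Sum>m=1..n. J m))) {a..a+2*pi}"
    by (intro has_integral_mult_right has_integral_add h0 has_integral_mult_right hs)
  moreover have eqV: "A * ((if k = 0 then 2*pi*cos c else 0) + 2 * (\<Sum>m=1..n. J m)) = 2*pi*(A * cos (of_int k * x + c))"
    using sumJ by auto
  moreover have eqF: "A * (cos (of_int k * t + c) + 2 * (\<Sum>m=1..n. cos (of_int k * t + c) * cos (real m * (x - t))))
      = A * cos (of_int k * t + c) * Dk n (x - t)" for t
    by (simp add: Dk_def sum_distrib_left algebra_simps)
  ultimately show ?thesis by (simp only: eqF eqV)
qed

definition intfreq :: "nat \<Rightarrow> (real \<times> real \<times> real) list \<Rightarrow> bool" where
  "intfreq n ts \<longleftrightarrow> (\<forall>p\<in>set ts. \<exists>k::int. fst p = of_int k \<and> \<bar>k\<bar> \<le> int n)"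

lemma reproduce:
  assumes "intfreq n ts"
  shows "((\<lambda>t. teval ts t * Dk n (x - t)) has_integral (2*pi*teval ts x)) {a..a+2*pi}"
  using assms
proof (induction ts)
  case Nil thus ?case by simp
next
  case (Cons p ts)
  obtain w A c where p: "p = (w,A,c)" by (cases p) auto
  from Cons.prems p obtain k :: int where k: "w = of_int k" "\<bar>k\<bar> \<le> int n" by (auto simp: intfreq_def)
  have ih: "((\<lambda>t. teval ts t * Dk n (x - t)) has_integral (2*pi*teval ts x)) {a..a+2*pi}"
    using Cons by (auto simp: intfreq_def)
  have "((\<lambda>t. A * cos (of_int k * t + c) * Dk n (x - t) + teval ts t * Dk n (x - t)) has_integral
        (2*pi*(A * cos (of_int k * x + c)) + 2*pi*teval ts x)) {a..a+2*pi}"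
    by (intro has_integral_add hi_term k ih)
  then show ?case using p k by (simp add: algebra_simps)
qed

lemma intfreq_tder: "intfreq n ts \<Longrightarrow> intfreq n ((tder ^^ j) ts)"
proof -
  assume "intfreq n ts"
  moreover have "set (map fst ((tder ^^ j) ts)) = set (map fst ts)" by (simp only: tder_pow_freq)
  ultimately show ?thesis unfolding intfreq_def by (metis (no_types, lifting) image_iff list.set_map)
qed

lemma teval_period: "intfreq n ts \<Longrightarrow> teval ts (x + 2*pi) = teval ts x"
proof (induction ts)
  case Nil thus ?case by simp
next
  case (Cons p ts)
  obtain w A c where p: "p = (w,A,c)" by (cases p) auto
  from Cons.prems p obtain k :: int where k: "w = of_int k" by (auto simp: intfreq_def)
  have "cos (w * (x + 2*pi) + c) = cos (w * x + c)" using k cos_int_period by simp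
  then show ?case using Cons p by (auto simp: intfreq_def)
qed


lemma abs_cos_diff_le: fixes p r :: real shows "\<bar>cos p - cos r\<bar> \<le> \<bar>p - r\<bar>"
proof -
  have "\<bar>cos p - cos r\<bar> = 2 * \<bar>sin ((p + r) / 2)\<bar> * \<bar>sin ((r - p) / 2)\<bar>"
    by (simp add: cos_diff_cos abs_mult)
  also have "\<dots> \<le> 2 * 1 * \<bar>(r - p)/2\<bar>"
    by (intro mult_mono abs_sin_x_le_abs_x) auto
  finally show ?thesis by simp
qed

lemma Dk_lip: "\<bar>Dk n u - Dk n v\<bar> \<le> real n * (real n + 1) * \<bar>u - v\<bar>"
proof -
  have "Dk n u - Dk n v = 2 * (\<Sum>m=1..n. cos (real m * u) - cos (real m * v))"
    by (simp add: Dk_def sum_subtractf algebra_simps)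
  then have "\<bar>Dk n u - Dk n v\<bar> = 2 * \<bar>\<Sum>m=1..n. cos (real m * u) - cos (real m * v)\<bar>"
    by (simp add: abs_mult)
  also have "\<dots> \<le> 2 * (\<Sum>m=1..n. \<bar>cos (real m * u) - cos (real m * v)\<bar>)"
    by (intro mult_left_mono sum_abs) auto
  also have "\<dots> \<le> 2 * (\<Sum>m=1..n. real m * \<bar>u - v\<bar>)"
  proof (intro mult_left_mono sum_mono)
    fix m assume "m \<in> {1..n}"
    have "\<bar>cos (real m * u) - cos (real m * v)\<bar> \<le> \<bar>real m * u - real m * v\<bar>" by (rule abs_cos_diff_le)
    also have "\<dots> = real m * \<bar>u - v\<bar>" by (simp add: abs_mult right_diff_distrib[symmetric])
    finally show "\<bar>cos (real m * u) - cos (real m * v)\<bar> \<le> real m * \<bar>u - v\<bar>" .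
  qed auto
  also have "\<dots> = 2 * (\<Sum>m=1..n. real m) * \<bar>u - v\<bar>" by (simp add: sum_distrib_right)
  also have "2 * (\<Sum>m=1..n. real m) = real n * (real n + 1)"
    by (induction n) (auto simp: algebra_simps)
  finally show ?thesis by simp
qed

lemma int_abs_le:
  fixes f g :: "real \<Rightarrow> real"
  assumes "f integrable_on S" "g integrable_on S" "\<And>x. x \<in> S \<Longrightarrow> \<bar>f x\<bar> \<le> g x"
  shows "\<bar>integral S f\<bar> \<le> integral S g"
proof -
  have "integral S f \<le> integral S g" using assms by (intro integral_le) (auto simp: abs_le_iff)
  moreover have "integral S (\<lambda>x. - f x) \<le> integral S g" using assms
    by (intro integral_le) (auto simp: abs_le_iff integrable_neg)
  ultimately show ?thesis by (simp add: integral_neg assms)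
qed

lemma teval_lip:
  assumes "intfreq n ts"
  shows "\<bar>teval ts x - teval ts z\<bar> \<le> real n * (real n + 1) * \<bar>x - z\<bar> / (2*pi) * integral {a..a+2*pi} (\<lambda>t. \<bar>teval ts t\<bar>)"
proof -
  let ?w = "teval ts"
  have cw: "continuous_on UNIV ?w" by (rule teval_cont)
  have cD: "continuous_on UNIV (Dk n)" unfolding Dk_def by (intro continuous_intros)
  have h: "((\<lambda>t. ?w t * Dk n (x - t) - ?w t * Dk n (z - t)) has_integral (2*pi*?w x - 2*pi*?w z)) {a..a+2*pi}"
    by (intro has_integral_diff reproduce assms)
  have int1: "(\<lambda>t. ?w t * Dk n (x - t) - ?w t * Dk n (z - t)) integrable_on {a..a+2*pi}"
    using h by blast
  have int2: "(\<lambda>t. real n * (real n + 1) * \<bar>x - z\<bar> * \<bar>?w t\<bar>) integrable_on {a..a+2*pi}"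
    by (intro integrable_continuous_interval continuous_intros continuous_on_subset[OF cw]) auto
  have "\<bar>2*pi*?w x - 2*pi*?w z\<bar> \<le> integral {a..a+2*pi} (\<lambda>t. real n * (real n + 1) * \<bar>x - z\<bar> * \<bar>?w t\<bar>)"
  proof -
    have "\<bar>2*pi*?w x - 2*pi*?w z\<bar> = \<bar>integral {a..a+2*pi} (\<lambda>t. ?w t * Dk n (x - t) - ?w t * Dk n (z - t))\<bar>"
      using h by (simp add: integral_unique)
    also have "\<dots> \<le> integral {a..a+2*pi} (\<lambda>t. real n * (real n + 1) * \<bar>x - z\<bar> * \<bar>?w t\<bar>)"
    proof (rule int_abs_le[OF int1 int2])
      fix t
      have "\<bar>?w t * Dk n (x - t) - ?w t * Dk n (z - t)\<bar> = \<bar>?w t\<bar> * \<bar>Dk n (x - t) - Dk n (z - t)\<bar>"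
        by (simp add: abs_mult right_diff_distrib[symmetric])
      also have "\<dots> \<le> \<bar>?w t\<bar> * (real n * (real n + 1) * \<bar>(x - t) - (z - t)\<bar>)"
        by (intro mult_left_mono Dk_lip) auto
      finally show "\<bar>?w t * Dk n (x - t) - ?w t * Dk n (z - t)\<bar> \<le> real n * (real n + 1) * \<bar>x - z\<bar> * \<bar>?w t\<bar>"
        by (simp add: algebra_simps)
    qed
    finally show ?thesis .
  qed
  also have "\<dots> = real n * (real n + 1) * \<bar>x - z\<bar> * integral {a..a+2*pi} (\<lambda>t. \<bar>?w t\<bar>)"
    by simp
  finally have "2*pi*\<bar>?w x - ?w z\<bar> \<le> real n * (real n + 1) * \<bar>x - z\<bar> * integral {a..a+2*pi} (\<lambda>t. \<bar>?w t\<bar>)"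
    by (simp add: abs_mult right_diff_distrib[symmetric])
  then show ?thesis using pi_gt_zero by (simp add: field_simps)
qed


lemma convex_D2_nonneg:
  fixes h h1 :: "real \<Rightarrow> real"
  assumes cv: "convex_on {l<..<r} h" and x: "x \<in> {l<..<r}"
    and d1: "\<And>t. t \<in> {l<..<r} \<Longrightarrow> (h has_real_derivative h1 t) (at t)"
    and d2: "(h1 has_real_derivative d) (at x)"
  shows "d \<ge> 0"
proof (rule ccontr)
  assume "\<not> d \<ge> 0" then have dn: "d < 0" by simp
  obtain e1 where e1: "e1 > 0" "\<And>t. t > 0 \<Longrightarrow> t < e1 \<Longrightarrow> h1 x > h1 (x + t)"
    using DERIV_neg_dec_right[OF d2 dn] by blast
  obtain e2 where e2: "e2 > 0" "\<And>t. t > 0 \<Longrightarrow> t < e2 \<Longrightarrow> h1 x < h1 (x - t)"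
    using DERIV_neg_dec_left[OF d2 dn] by blast
  define t where "t = min (min e1 e2) (min (x - l) (r - x)) / 2"
  have tl: "t \<le> (x - l)/2" "t \<le> (r - x)/2" "t \<le> e1/2" "t \<le> e2/2" by (auto simp: t_def)
  have "t > 0" using x e1 e2 by (auto simp: t_def)
  then have t: "t > 0" "t < e1" "t < e2" "x - t > l" "x + t < r" using tl x e1 e2 by auto
  obtain z1 where z1: "x < z1" "z1 < x + t" "h (x + t) - h x = (x + t - x) * h1 z1"
    using MVT2[of x "x+t" h h1] t d1 by (smt (verit) greaterThanLessThan_iff x)
  obtain z2 where z2: "x - t < z2" "z2 < x" "h x - h (x - t) = (x - (x - t)) * h1 z2"
    using MVT2[of "x-t" x h h1] t d1 by (smt (verit) greaterThanLessThan_iff x)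
  have "h1 z1 < h1 x" using e1(2)[of "z1 - x"] z1 t by auto
  moreover have "h1 z2 > h1 x" using e2(2)[of "x - z2"] z2 t by auto
  ultimately have "h (x + t) - h x < h x - h (x - t)" using z1 z2 t by (simp add: mult_strict_left_mono)
  moreover have "h x \<le> (1/2) * h (x - t) + (1/2) * h (x + t)"
  proof -
    have "h ((1 - 1/2) *\<^sub>R (x - t) + (1/2) *\<^sub>R (x + t)) \<le> (1 - 1/2) * h (x - t) + (1/2) * h (x + t)"
      by (rule convex_onD[OF cv]) (use t in auto)
    moreover have "(1 - 1/2) *\<^sub>R (x - t) + (1/2::real) *\<^sub>R (x + t) = x" by (simp add: field_simps)
    ultimately show ?thesis by simp
  qed
  ultimately show False by simp
qed

definition per :: "(real \<Rightarrow> real) \<Rightarrow> bool" where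
  "per h \<longleftrightarrow> (\<forall>x. h (x + 2*pi) = h x)"

lemma per_deriv:
  assumes "per h" "\<And>x. (h has_real_derivative h1 x) (at x)"
  shows "per h1"
  unfolding per_def
proof
  fix x
  have "((\<lambda>y. h (y + 2*pi)) has_real_derivative h1 (x + 2*pi)) (at x)"
  proof -
    have dg: "((\<lambda>y. y + 2*pi) has_real_derivative 1) (at x)" by (auto intro!: derivative_eq_intros)
    show ?thesis using DERIV_chain2[where f=h and g="\<lambda>y. y + 2*pi" and x=x, OF assms(2)[of "x+2*pi"] dg] by simp
  qed
  moreover have "(\<lambda>y. h (y + 2*pi)) = h" using assms(1) by (auto simp: per_def)
  ultimately show "h1 (x + 2*pi) = h1 x" using assms(2)[of x] DERIV_unique by metis
qed

lemma ibp_period: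
  fixes u v u' v' :: "real \<Rightarrow> real"
  assumes du: "\<And>x. (u has_real_derivative u' x) (at x)"
    and dv: "\<And>x. (v has_real_derivative v' x) (at x)"
    and cu: "continuous_on UNIV u'" and cv: "continuous_on UNIV v'"
    and pu: "per u" and pv: "per v"
  shows "integral {a..a+2*pi} (\<lambda>x. u' x * v x) = - integral {a..a+2*pi} (\<lambda>x. u x * v' x)"
proof -
  have cu0: "continuous_on UNIV u" using du by (meson DERIV_isCont continuous_at_imp_continuous_on)
  have cv0: "continuous_on UNIV v" using dv by (meson DERIV_isCont continuous_at_imp_continuous_on)
  have "((\<lambda>x. u' x * v x + u x * v' x) has_integral (u (a+2*pi) * v (a+2*pi) - u a * v a)) {a..a+2*pi}"
  proof (rule fundamental_theorem_of_calculus)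
    show "((\<lambda>x. u x * v x) has_vector_derivative u' x * v x + u x * v' x) (at x within {a..a+2*pi})" for x
      unfolding has_real_derivative_iff_has_vector_derivative[symmetric]
      using DERIV_mult[OF du dv, of x] by (simp add: has_field_derivative_at_within algebra_simps)
  qed (use pi_gt_zero in auto)
  moreover have "u (a+2*pi) * v (a+2*pi) - u a * v a = 0" using pu pv by (simp add: per_def)
  ultimately have "integral {a..a+2*pi} (\<lambda>x. u' x * v x + u x * v' x) = 0" by (simp add: integral_unique)
  moreover have "(\<lambda>x. u' x * v x) integrable_on {a..a+2*pi}"
    by (intro integrable_continuous_interval continuous_intros continuous_on_subset[OF cu] continuous_on_subset[OF cv0]) auto
  moreover have "(\<lambda>x. u x * v' x) integrable_on {a..a+2*pi}"
    by (intro integrable_continuous_interval continuous_intros continuous_on_subset[OF cu0] continuous_on_subset[OF cv]) auto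
  ultimately show ?thesis by (simp add: integral_add)
qed

lemma ibp_chain:
  fixes U V :: "nat \<Rightarrow> real \<Rightarrow> real"
  assumes "\<And>j x. j < k \<Longrightarrow> (U j has_real_derivative U (Suc j) x) (at x)"
    and "\<And>j x. j < k \<Longrightarrow> (V j has_real_derivative V (Suc j) x) (at x)"
    and "\<And>j. j \<le> k \<Longrightarrow> continuous_on UNIV (U j)"
    and "\<And>j. j \<le> k \<Longrightarrow> continuous_on UNIV (V j)"
    and "\<And>j. j \<le> k \<Longrightarrow> per (U j)" and "\<And>j. j \<le> k \<Longrightarrow> per (V j)"
  shows "integral {a..a+2*pi} (\<lambda>x. U 0 x * V k x) = (-1)^k * integral {a..a+2*pi} (\<lambda>x. U k x * V 0 x)"
  using assms
proof (induction k arbitrary: U)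
  case 0 thus ?case by simp
next
  case (Suc k)
  have "integral {a..a+2*pi} (\<lambda>x. V (Suc k) x * U 0 x) = - integral {a..a+2*pi} (\<lambda>x. V k x * U 1 x)"
    by (rule ibp_period) (use Suc.prems in auto)
  then have s1: "integral {a..a+2*pi} (\<lambda>x. U 0 x * V (Suc k) x) = - integral {a..a+2*pi} (\<lambda>x. U 1 x * V k x)"
    by (simp add: mult.commute)
  have ih: "integral {a..a+2*pi} (\<lambda>x. (U \<circ> Suc) 0 x * V k x) = (-1)^k * integral {a..a+2*pi} (\<lambda>x. (U \<circ> Suc) k x * V 0 x)"
    by (rule Suc.IH) (use Suc.prems in auto)
  show ?case using s1 ih by simp
qed


lemma jordan: fixes t :: real assumes "0 \<le> t" "t \<le> pi/2" shows "sin t \<ge> 2 * t / pi"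
proof -
  have cv: "convex_on {0..pi/2} (\<lambda>x. - sin x)"
  proof (rule f''_ge0_imp_convex[where f' = "\<lambda>x. - cos x" and f'' = "\<lambda>x. sin x"])
    show "\<And>x. x \<in> {0..pi/2} \<Longrightarrow> ((\<lambda>x. - sin x) has_real_derivative - cos x) (at x)"
      by (auto intro!: derivative_eq_intros)
    show "\<And>x. x \<in> {0..pi/2} \<Longrightarrow> ((\<lambda>x. - cos x) has_real_derivative sin x) (at x)"
      by (auto intro!: derivative_eq_intros)
    show "\<And>x. x \<in> {0..pi/2} \<Longrightarrow> sin x \<ge> 0" by (auto intro!: sin_ge_zero)
  qed auto
  define u where "u = 2 * t / pi"
  have u: "0 \<le> u" "u \<le> 1" using assms pi_gt_zero by (auto simp: u_def field_simps)
  have "- sin ((1 - u) *\<^sub>R 0 + u *\<^sub>R (pi/2)) \<le> (1 - u) * (- sin 0) + u * (- sin (pi/2))"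
    by (rule convex_onD[OF cv]) (use u pi_gt_zero in auto)
  moreover have "(1 - u) *\<^sub>R 0 + u *\<^sub>R (pi/2) = t" using pi_gt_zero by (simp add: u_def)
  ultimately show ?thesis by (simp add: u_def)
qed

lemma sin_half_lb: fixes u :: real assumes "0 \<le> u" "u \<le> 2*pi"
  shows "sin (u/2) \<ge> min u (2*pi - u) / pi"
proof (cases "u \<le> pi")
  case True
  then have "sin (u/2) \<ge> 2 * (u/2) / pi" by (intro jordan) (use assms in auto)
  moreover have "min u (2*pi - u) / pi \<le> u / pi" by (intro divide_right_mono) auto
  ultimately show ?thesis by simp
next
  case False
  have "sin (u/2) = sin (pi - u/2)" by simp
  also have "\<dots> \<ge> 2 * (pi - u/2) / pi" by (intro jordan) (use assms False in auto)
  finally have "sin (u/2) \<ge> (2*pi - u) / pi" by (simp add: field_simps)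
  moreover have "min u (2*pi - u) / pi \<le> (2*pi - u) / pi" by (intro divide_right_mono) auto
  ultimately show ?thesis by linarith
qed

lemma abs_sin_half_lb: fixes u :: real assumes "\<bar>u\<bar> \<le> 2*pi"
  shows "\<bar>sin (u/2)\<bar> \<ge> min \<bar>u\<bar> (2*pi - \<bar>u\<bar>) / pi"
proof (cases "u \<ge> 0")
  case True thus ?thesis using sin_half_lb[of u] assms by auto
next
  case False
  have "sin ((-u)/2) \<ge> min (-u) (2*pi - (-u)) / pi" using sin_half_lb[of "-u"] assms False by auto
  then show ?thesis using False by auto
qed

locale pts =
  fixes s :: nat and y :: "nat \<Rightarrow> real"
  assumes s1: "s \<ge> 1" and dec: "\<forall>i<2 * s. y (Suc i) < y i"
    and yp: "y 0 = y (2 * s) + 2 * pi"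
begin

lemma ymono: "i \<le> j \<Longrightarrow> j \<le> 2 * s \<Longrightarrow> y j \<le> y i"
proof (induction j rule: dec_induct)
  case base thus ?case by simp
next
  case (step k) thus ?case using dec by (metis Suc_le_lessD order_less_imp_le order_trans)
qed

definition d0 :: real where "d0 = Min ((\<lambda>j. y (j - 1) - y j) ` {1..2 * s})"

lemma d0_pos: "d0 > 0"
proof -
  have "finite ((\<lambda>j. y (j - 1) - y j) ` {1..2 * s})" by simp
  moreover have "(\<lambda>j. y (j - 1) - y j) ` {1..2 * s} \<noteq> {}" using s1 by auto
  moreover have "\<forall>v\<in>(\<lambda>j. y (j - 1) - y j) ` {1..2 * s}. v > 0"
  proof
    fix v assume "v \<in> (\<lambda>j. y (j - 1) - y j) ` {1..2 * s}"
    then obtain j where j: "j \<in> {1..2 * s}" "v = y (j - 1) - y j" by auto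
    moreover have "j - 1 < 2 * s" using j by auto
    ultimately have "y (Suc (j - 1)) < y (j - 1)" using dec by auto
    moreover have "Suc (j - 1) = j" using j by auto
    ultimately show "v > 0" using j by simp
  qed
  ultimately show ?thesis unfolding d0_def by (subst Min_gr_iff) auto
qed

lemma d0_le: "1 \<le> j \<Longrightarrow> j \<le> 2 * s \<Longrightarrow> y (j - 1) - y j \<ge> d0"
  unfolding d0_def by (intro Min_le) auto

lemma ygap: "i < j \<Longrightarrow> j \<le> 2 * s \<Longrightarrow> y i - y j \<ge> d0"
proof -
  assume ij: "i < j" "j \<le> 2 * s"
  have "y (j - 1) - y j \<ge> d0" using ij by (intro d0_le) auto
  moreover have "y i \<ge> y (j - 1)" using ij by (intro ymono) auto
  ultimately show ?thesis by linarith
qed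

lemma ylt: "i < j \<Longrightarrow> j \<le> 2 * s \<Longrightarrow> y j < y i"
  using ygap d0_pos by fastforce

definition g :: "real \<Rightarrow> real" where
  "g x = (\<Prod>k=1..2 * s. sin ((x - y k) / 2))"

definition gl :: "(real \<times> real \<times> real) list" where
  "gl = foldr (\<lambda>k acc. tmul [(1/2, 1, - y k / 2 - pi/2)] acc) [1..<2 * s+1] [(0, 1, 0)]"

lemma teval_gl: "teval gl x = g x"
proof -
  have "teval (foldr (\<lambda>k acc. tmul [(1/2, 1, - y k / 2 - pi/2)] acc) ks [(0, 1, 0)]) x
        = (\<Prod>k\<leftarrow>ks. sin ((x - y k) / 2))" for ks
  proof (induction ks)
    case Nil thus ?case by simp
  next
    case (Cons k ks)
    have "cos (1/2 * x + (- y k / 2 - pi/2)) = sin ((x - y k)/2)"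
    proof -
      have "cos (t - pi/2) = sin t" for t :: real by (simp add: cos_diff)
      moreover have "1/2 * x + (- y k / 2 - pi/2) = (x - y k)/2 - pi/2" by (simp add: field_simps)
      ultimately show ?thesis by metis
    qed
    then show ?case using Cons by (simp del: tmul.simps add: teval_tmul)
  qed
  from this[of "[1..<2 * s+1]"] have e: "teval gl x = (\<Prod>k\<leftarrow>[1..<2 * s+1]. sin ((x - y k) / 2))"
    unfolding gl_def .
  have "(\<Prod>k\<leftarrow>[1..<2 * s+1]. sin ((x - y k) / 2)) = (\<Prod>k\<in>set [1..<2 * s+1]. sin ((x - y k) / 2))"
    by (rule prod.distinct_set_conv_list[symmetric]) simp
  also have "set [1..<2 * s+1] = {1..2 * s}" by auto
  finally show ?thesis using e unfolding g_def by simp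
qed

lemma g_per: "per g"
  unfolding per_def
proof
  fix x
  have "g (x + 2*pi) = (\<Prod>k=1..2 * s. - sin ((x - y k) / 2))"
    unfolding g_def
  proof (rule prod.cong)
    fix k
    have "(x + 2*pi - y k)/2 = (x - y k)/2 + pi" by (simp add: field_simps)
    then show "sin ((x + 2 * pi - y k) / 2) = - sin ((x - y k) / 2)" by (metis sin_periodic_pi)
  qed simp
  also have "\<dots> = (-1)^(2 * s) * g x" unfolding g_def by (simp add: prod_uminus)
  finally show "g (x + 2*pi) = g x" by simp
qed

end

context pts begin

lemma g_sign:
  assumes i: "1 \<le> i" "i \<le> 2 * s" and x: "y i < x" "x < y (i - 1)"
  shows "(-1)^(i - 1) * g x > 0"
proof -
  have fin: "finite {1..<i}" "finite {i..2 * s}" by auto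
  have un: "{1..2 * s} = {1..<i} \<union> {i..2 * s}" using i by auto
  have "g x = (\<Prod>k\<in>{1..<i}. sin ((x - y k) / 2)) * (\<Prod>k\<in>{i..2 * s}. sin ((x - y k) / 2))"
    unfolding g_def un by (rule prod.union_disjoint) auto
  moreover have "(\<Prod>k\<in>{1..<i}. - sin ((x - y k) / 2)) = (-1)^(i - 1) * (\<Prod>k\<in>{1..<i}. sin ((x - y k) / 2))"
    by (simp add: prod_uminus)
  ultimately have e: "(-1)^(i - 1) * g x = (\<Prod>k\<in>{1..<i}. - sin ((x - y k) / 2)) * (\<Prod>k\<in>{i..2 * s}. sin ((x - y k) / 2))"
    by simp
  have "y (2 * s) + 2 * pi = y 0" using yp by simp
  have p1: "- sin ((x - y k) / 2) > 0" if "k \<in> {1..<i}" for k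
  proof -
    have "y (i - 1) \<le> y k" using that i by (intro ymono) auto
    moreover have "y k \<le> y 1" "y (2 * s) \<le> y i" "y 1 < y 0" using that i s1 by (auto intro!: ymono ylt)
    ultimately have "- pi < (x - y k)/2" "(x - y k)/2 < 0" using x yp by auto
    moreover have "sin ((x - y k)/2) = - sin ((y k - x)/2)" by (metis minus_diff_eq minus_divide_left sin_minus)
    ultimately have "sin ((x - y k)/2) < 0"
      using sin_gt_zero[of "(y k - x)/2"] by auto
    then show ?thesis by simp
  qed
  have p2: "sin ((x - y k) / 2) > 0" if "k \<in> {i..2 * s}" for k
  proof -
    have "y k \<le> y i" using that by (intro ymono) auto
    moreover have "y (i - 1) \<le> y 0" "y (2 * s) \<le> y k" using that i by (auto intro!: ymono)
    ultimately have "0 < (x - y k)/2" "(x - y k)/2 < pi" using x yp by auto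
    then show ?thesis by (rule sin_gt_zero)
  qed
  show ?thesis unfolding e using p1 p2 by (intro mult_pos_pos prod_pos) auto
qed

lemma g_zero: "j \<le> 2 * s \<Longrightarrow> g (y j) = 0"
proof -
  assume j: "j \<le> 2 * s"
  have z: "g (y k) = 0" if "1 \<le> k" "k \<le> 2 * s" for k
    unfolding g_def using that by (intro prod_zero bexI[of _ k]) auto
  show ?thesis
  proof (cases "j = 0")
    case True
    have "g (y 0) = g (y (2 * s))" using yp g_per by (simp add: per_def)
    then show ?thesis using True z[of "2 * s"] s1 by simp
  next
    case False thus ?thesis using z j by simp
  qed
qed

definition cg :: real where "cg = d0 / (2 * pi^2) * (d0 / pi)^(2 * s - 2)"

lemma cg_pos: "cg > 0" using d0_pos by (simp add: cg_def)

lemma arcs_len: "1 \<le> i \<Longrightarrow> i \<le> 2 * s \<Longrightarrow> y (i - 1) - y i \<le> 2 * pi - d0"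
proof -
  assume i: "1 \<le> i" "i \<le> 2 * s"
  show ?thesis
  proof (cases "i = 1")
    case True
    have "y 1 - y (2 * s) \<ge> d0" using s1 by (intro ygap) auto
    then show ?thesis using True yp by simp
  next
    case False
    have "y 0 - y (i - 1) \<ge> d0" using i False by (intro ygap) auto
    moreover have "y (2 * s) \<le> y i" using i by (intro ymono) auto
    ultimately show ?thesis using yp by simp
  qed
qed

lemma g_lb:
  assumes i: "1 \<le> i" "i \<le> 2 * s" and eta: "0 < \<eta>" "\<eta> \<le> d0 / 2"
    and x: "y i + \<eta> \<le> x" "x \<le> y (i - 1) - \<eta>"
  shows "\<bar>g x\<bar> \<ge> cg * \<eta>"
proof -
  define i' where "i' = (if i = 1 then 2 * s else i - 1)"
  have i': "i' \<in> {1..2 * s}" "i' \<noteq> i" using i s1 by (auto simp: i'_def)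
  define L where "L k = (if k = i then min (x - y i) d0 / pi else if k = i' then min (y (i - 1) - x) d0 / pi else d0 / pi)" for k
  have d0p: "d0 > 0" by (rule d0_pos)
  have al: "y (i - 1) - y i \<le> 2 * pi - d0" by (rule arcs_len) (use i in auto)
  have gi: "y (i - 1) - y i \<ge> d0" using i by (intro d0_le) auto
  have fac: "\<bar>sin ((x - y k) / 2)\<bar> \<ge> L k" if k: "k \<in> {1..2 * s}" for k
  proof -
    have m: "min \<bar>x - y k\<bar> (2 * pi - \<bar>x - y k\<bar>) \<ge> L k * pi \<and> \<bar>x - y k\<bar> \<le> 2 * pi"
    proof (cases "k = i")
      case True
      then show ?thesis using x eta al d0p by (auto simp: L_def min_def)
    next
      case ki: False
      show ?thesis
      proof (cases "k = i'")
        case True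
        show ?thesis
        proof (cases "i = 1")
          case True
          have "y 1 - y (2 * s) \<ge> d0" using s1 by (intro ygap) auto
          then show ?thesis using \<open>k = i'\<close> True x eta d0p yp ki by (auto simp: L_def i'_def min_def)
        next
          case False
          then have "k = i - 1" using \<open>k = i'\<close> by (simp add: i'_def)
          then show ?thesis using x eta al d0p ki \<open>k = i'\<close> by (auto simp: L_def min_def)
        qed
      next
        case ki': False
        have Lk: "L k = d0 / pi" using ki ki' by (simp add: L_def)
        have range: "y (2 * s) \<le> y k" "y k \<le> y 0" "y (2 * s) \<le> y i" "y (i - 1) \<le> y 0" "y 1 \<le> y 0"
          using k i by (auto intro!: ymono)
        show ?thesis
        proof (cases "k > i")
          case True
          have "y i - y k \<ge> d0" using True k by (intro ygap) auto
          moreover have "(i \<ge> 2 \<and> y 0 - y (i - 1) \<ge> d0) \<or> (i = 1 \<and> k < 2 * s \<and> y k - y (2 * s) \<ge> d0)"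
          proof (cases "i = 1")
            case True
            then have "k < 2 * s" using ki' k by (auto simp: i'_def)
            then show ?thesis using True by (auto intro!: ygap)
          next
            case False
            then show ?thesis using i by (auto intro!: ygap)
          qed
          ultimately show ?thesis using Lk x eta range yp pi_gt_zero by (auto simp: min_def)
        next
          case False
          then have "k < i - 1" using ki ki' i k by (auto simp: i'_def split: if_splits)
          then have "y k - y (i - 1) \<ge> d0" using i by (intro ygap) auto
          moreover have "y k \<le> y 1" "y (2 * s) \<le> y i"
            using k s1 i by (auto intro!: ymono)
          moreover have "y 0 - y 1 \<ge> d0" using s1 by (intro ygap) auto
          ultimately show ?thesis using Lk x eta range yp pi_gt_zero by (auto simp: min_def)
        qed
      qed
    qed
    have "\<bar>sin ((x - y k) / 2)\<bar> \<ge> min \<bar>x - y k\<bar> (2 * pi - \<bar>x - y k\<bar>) / pi"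
      using m by (intro abs_sin_half_lb) auto
    moreover have "min \<bar>x - y k\<bar> (2 * pi - \<bar>x - y k\<bar>) / pi \<ge> L k"
      using m pi_gt_zero by (simp add: field_simps)
    ultimately show ?thesis by linarith
  qed
  have L0: "L k \<ge> 0" for k using x eta d0p by (auto simp: L_def)
  have "\<bar>g x\<bar> = (\<Prod>k=1..2 * s. \<bar>sin ((x - y k) / 2)\<bar>)" by (simp add: g_def abs_prod)
  also have "\<dots> \<ge> (\<Prod>k=1..2 * s. L k)" by (intro prod_mono) (use fac L0 in auto)
  finally have g1: "\<bar>g x\<bar> \<ge> (\<Prod>k=1..2 * s. L k)" .
  have "(\<Prod>k=1..2 * s. L k) = L i * (\<Prod>k\<in>{1..2 * s} - {i}. L k)"
    by (rule prod.remove) (use i in auto)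
  also have "(\<Prod>k\<in>{1..2 * s} - {i}. L k) = L i' * (\<Prod>k\<in>{1..2 * s} - {i} - {i'}. L k)"
    by (rule prod.remove) (use i' in auto)
  also have "(\<Prod>k\<in>{1..2 * s} - {i} - {i'}. L k) = (\<Prod>k\<in>{1..2 * s} - {i} - {i'}. d0 / pi)"
    by (intro prod.cong) (auto simp: L_def)
  also have "\<dots> = (d0 / pi)^(2 * s - 2)"
  proof -
    have "card ({1..2 * s} - {i} - {i'}) = 2 * s - 2" using i i' by (simp add: card_Diff_singleton_if)
    then show ?thesis by simp
  qed
  finally have g2: "(\<Prod>k=1..2 * s. L k) = L i * L i' * (d0 / pi)^(2 * s - 2)" by simp
  have Lii: "L i * L i' \<ge> \<eta> * d0 / (2 * pi^2)"
  proof -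
    have Li: "L i = min (x - y i) d0 / pi" by (simp add: L_def)
    have Li': "L i' = min (y (i - 1) - x) d0 / pi" using i' by (simp add: L_def)
    have "min (x - y i) d0 * min (y (i - 1) - x) d0 \<ge> \<eta> * (d0 / 2)"
    proof (cases "x - y i \<ge> d0 / 2")
      case True
      have "min (x - y i) d0 \<ge> d0 / 2" "min (y (i - 1) - x) d0 \<ge> \<eta>" using True x eta d0p by auto
      then have "d0 / 2 * \<eta> \<le> min (x - y i) d0 * min (y (i - 1) - x) d0"
        using eta d0p by (intro mult_mono) auto
      then show ?thesis by (simp add: mult.commute)
    next
      case False
      then have "y (i - 1) - x \<ge> d0 / 2" using gi by linarith
      then have "min (y (i - 1) - x) d0 \<ge> d0 / 2" "min (x - y i) d0 \<ge> \<eta>" using x eta d0p by auto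
      then show ?thesis using eta d0p by (intro mult_mono) auto
    qed
    then show ?thesis unfolding Li Li' using pi_gt_zero
      by (simp add: field_simps power2_eq_square)
  qed
  have "cg * \<eta> = \<eta> * d0 / (2 * pi^2) * (d0 / pi)^(2 * s - 2)" by (simp add: cg_def)
  also have "\<dots> \<le> L i * L i' * (d0 / pi)^(2 * s - 2)"
    by (intro mult_right_mono Lii) (use d0p in auto)
  finally show ?thesis using g1 g2 by linarith
qed

lemma cover:
  assumes "y (2 * s) \<le> x" "x \<le> y 0"
  shows "(\<exists>j\<le>2 * s. x = y j) \<or> (\<exists>i. 1 \<le> i \<and> i \<le> 2 * s \<and> y i < x \<and> x < y (i - 1))"
proof (cases "x = y 0")
  case True thus ?thesis by auto
next
  case False
  define i where "i = (LEAST i. y i \<le> x)"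
  have ex: "y (2 * s) \<le> x" using assms by simp
  have yi: "y i \<le> x" unfolding i_def by (rule LeastI[of _ "2 * s"]) (rule ex)
  have ile: "i \<le> 2 * s" unfolding i_def by (rule Least_le) (rule ex)
  have i0: "i \<noteq> 0"
  proof
    assume "i = 0" then have "y 0 \<le> x" using yi by simp
    then show False using False assms by simp
  qed
  have "\<not> y (i - 1) \<le> x" unfolding i_def
    using not_less_Least[of "i - 1" "\<lambda>i. y i \<le> x"] i0 unfolding i_def[symmetric] by auto
  then show ?thesis using yi ile i0
    by (metis One_nat_def Suc_leI less_eq_real_def neq0_conv not_le)
qed

lemma arcsum:
  fixes h :: "real \<Rightarrow> real"
  assumes "continuous_on {y (2 * s)..y 0} h"
  shows "integral {y (2 * s)..y 0} h = (\<Sum>i=1..2 * s. integral {y i..y (i - 1)} h)"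
proof -
  have "k \<le> 2 * s \<Longrightarrow> integral {y k..y 0} h = (\<Sum>i=1..k. integral {y i..y (i - 1)} h)" for k
  proof (induction k)
    case 0 thus ?case by simp
  next
    case (Suc k)
    have "y (2 * s) \<le> y (Suc k)" using Suc.prems by (intro ymono) auto
    then have int: "h integrable_on {y (Suc k)..y 0}"
      by (intro integrable_continuous_interval continuous_on_subset[OF assms]) auto
    have "integral {y (Suc k)..y k} h + integral {y k..y 0} h = integral {y (Suc k)..y 0} h"
      by (rule Henstock_Kurzweil_Integration.integral_combine) (use Suc.prems int in \<open>auto intro!: ymono\<close>)
    then show ?case using Suc by simp
  qed
  from this[of "2 * s"] show ?thesis by simp
qed

end

lemma teval_concat_map: "teval (concat (map F ks)) x = (\<Sum>k\<leftarrow>ks. teval (F k) x)"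
  by (induction ks) (auto simp: teval_append)

lemma trig_to_list:
  assumes "trig_poly n T"
  shows "\<exists>Tl. intfreq n Tl \<and> (\<forall>x. T x = teval Tl x)"
proof -
  obtain a b :: "nat \<Rightarrow> real" where T: "\<forall>x. T x = a 0 + (\<Sum>k=1..n. a k * cos (real k * x) + b k * sin (real k * x))"
    using assms unfolding trig_poly_def by blast
  define Tl where "Tl = (0, a 0, 0) # concat (map (\<lambda>k. [(real k, a k, 0), (real k, b k, - pi/2)]) [1..<n+1])"
  have "intfreq n Tl"
    unfolding intfreq_def Tl_def
  proof
    fix p assume "p \<in> set ((0, a 0, 0) # concat (map (\<lambda>k. [(real k, a k, 0), (real k, b k, - pi / 2)]) [1..<n + 1]))"
    then have "fst p = 0 \<or> (\<exists>k\<in>{1..n}. fst p = real k)" by auto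
    then show "\<exists>k::int. fst p = of_int k \<and> \<bar>k\<bar> \<le> int n"
    proof
      assume "fst p = 0" then show ?thesis by (intro exI[of _ 0]) auto
    next
      assume "\<exists>k\<in>{1..n}. fst p = real k"
      then obtain k where "k \<in> {1..n}" "fst p = real k" by blast
      then show ?thesis by (intro exI[of _ "int k"]) auto
    qed
  qed
  moreover have "T x = teval Tl x" for x
  proof -
    have cs: "cos (t - pi/2) = sin t" for t :: real by (simp add: cos_diff)
    have "teval Tl x = a 0 + (\<Sum>k\<leftarrow>[1..<n+1]. a k * cos (real k * x) + b k * sin (real k * x))"
      unfolding Tl_def by (simp add: teval_concat_map cs)
    also have "(\<Sum>k\<leftarrow>[1..<n+1]. a k * cos (real k * x) + b k * sin (real k * x)) = (\<Sum>k\<in>set [1..<n+1]. a k * cos (real k * x) + b k * sin (real k * x))"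
      by (rule interv_sum_list_conv_sum_set_nat)
    also have "set [1..<n+1] = {1..n}" by auto
    finally show ?thesis using T by simp
  qed
  ultimately show ?thesis by blast
qed

lemma convex_on_cong': "convex_on S f \<Longrightarrow> (\<And>x. x \<in> S \<Longrightarrow> f x = h x) \<Longrightarrow> convex_on S h"
  unfolding convex_on_def by (metis (no_types, lifting) convexD)

lemma tder_suc: "teval ((tder ^^ Suc j) ts) = teval (tder ((tder ^^ j) ts))" by simp

lemma cont_side_right:
  fixes h :: "real \<Rightarrow> real"
  assumes "isCont h p" "e > 0" "\<And>z. p < z \<Longrightarrow> z < p + e \<Longrightarrow> h z \<ge> 0"
  shows "h p \<ge> 0"
proof (rule ccontr)
  assume "\<not> h p \<ge> 0"
  then have "h p < 0" by simp
  moreover have "h \<midarrow>p\<rightarrow> h p" using assms(1) by (simp add: isCont_def)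
  ultimately obtain r where r: "r > 0" "\<And>z. z \<noteq> p \<and> \<bar>p - z\<bar> < r \<longrightarrow> h z < 0"
    using LIM_fun_less_zero by blast
  define z where "z = p + min r e / 2"
  have "h z < 0" using r(1) assms(2) by (intro r(2)[rule_format]) (auto simp: z_def)
  moreover have "h z \<ge> 0" using r(1) assms(2) by (intro assms(3)) (auto simp: z_def)
  ultimately show False by simp
qed

lemma cont_side_left:
  fixes h :: "real \<Rightarrow> real"
  assumes "isCont h p" "e > 0" "\<And>z. p - e < z \<Longrightarrow> z < p \<Longrightarrow> h z \<ge> 0"
  shows "h p \<ge> 0"
proof (rule ccontr)
  assume "\<not> h p \<ge> 0"
  then have "h p < 0" by simp
  moreover have "h \<midarrow>p\<rightarrow> h p" using assms(1) by (simp add: isCont_def)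
  ultimately obtain r where r: "r > 0" "\<And>z. z \<noteq> p \<and> \<bar>p - z\<bar> < r \<longrightarrow> h z < 0"
    using LIM_fun_less_zero by blast
  define z where "z = p - min r e / 2"
  have "h z < 0" using r(1) assms(2) by (intro r(2)[rule_format]) (auto simp: z_def)
  moreover have "h z \<ge> 0" using r(1) assms(2) by (intro assms(3)) (auto simp: z_def)
  ultimately show False by simp
qed

context pts begin

lemma T_sign:
  assumes q: "q \<ge> 3" and TD: "T \<in> Delta_q q s y" and Tl: "\<And>x. T x = teval Tl x"
    and i: "1 \<le> i" "i \<le> 2 * s" and x: "y i < x" "x < y (i - 1)"
  shows "(-1)^(i - 1) * teval ((tder ^^ q) Tl) x \<ge> 0"
proof -
  define c :: real where "c = (-1)^(i - 1)"
  define I where "I = {y i<..<y (i - 1)}"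
  have oI: "open I" by (simp add: I_def)
  have "q_monotone q (\<lambda>x. (-1)^(i - 1) * T x) (y i) (y (i - 1))"
    using TD i unfolding Delta_q_def by auto
  then obtain G where ch: "deriv_chain (q - 2) G (\<lambda>x. c * T x) I" and cv: "convex_on I (G (q - 2))"
    unfolding q_monotone_def c_def I_def by blast
  have eqG: "\<forall>z\<in>I. G j z = c * teval ((tder ^^ j) Tl) z" if "j \<le> q - 2" for j
    using that
  proof (induction j)
    case 0 thus ?case using ch Tl by (simp add: deriv_chain_def)
  next
    case (Suc j)
    show ?case
    proof
      fix z assume z: "z \<in> I"
      have d1: "(G j has_real_derivative G (Suc j) z) (at z)" using ch Suc.prems z by (auto simp: deriv_chain_def)
      have "((\<lambda>z. c * teval ((tder ^^ j) Tl) z) has_real_derivative c * teval ((tder ^^ Suc j) Tl) z) (at z)"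
        using teval_deriv[of "(tder ^^ j) Tl" z] by (auto intro!: DERIV_cmult)
      then have d2: "(G j has_real_derivative c * teval ((tder ^^ Suc j) Tl) z) (at z)"
        by (rule has_field_derivative_transform_within_open[OF _ oI z]) (use Suc in auto)
      show "G (Suc j) z = c * teval ((tder ^^ Suc j) Tl) z" using DERIV_unique[OF d1 d2] .
    qed
  qed
  have cv2: "convex_on I (\<lambda>z. c * teval ((tder ^^ (q - 2)) Tl) z)"
    by (rule convex_on_cong'[OF cv]) (use eqG in auto)
  have xI: "x \<in> I" using x by (simp add: I_def)
  have "c * teval ((tder ^^ q) Tl) x \<ge> 0"
  proof (rule convex_D2_nonneg[OF cv2[unfolded I_def] xI[unfolded I_def]])
    show "((\<lambda>z. c * teval ((tder ^^ (q - 2)) Tl) z) has_real_derivative c * teval ((tder ^^ (q - 1)) Tl) t) (at t)" for t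
    proof -
      have "q - 1 = Suc (q - 2)" using q by simp
      then have e: "(tder ^^ (q - 1)) Tl = tder ((tder ^^ (q - 2)) Tl)" by simp
      show ?thesis unfolding e using teval_deriv[of "(tder ^^ (q - 2)) Tl" t] by (auto intro!: DERIV_cmult)
    qed
    show "((\<lambda>z. c * teval ((tder ^^ (q - 1)) Tl) z) has_real_derivative c * teval ((tder ^^ q) Tl) x) (at x)"
    proof -
      have "q = Suc (q - 1)" using q by simp
      then have e: "(tder ^^ q) Tl = tder ((tder ^^ (q - 1)) Tl)" by (metis comp_apply funpow.simps(2))
      show ?thesis unfolding e using teval_deriv[of "(tder ^^ (q - 1)) Tl" x] by (auto intro!: DERIV_cmult)
    qed
  qed
  then show ?thesis by (simp add: c_def)
qed

end

context pts begin

lemma wg_nonneg: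
  assumes Hs: "\<And>i x. 1 \<le> i \<Longrightarrow> i \<le> 2 * s \<Longrightarrow> y i < x \<Longrightarrow> x < y (i - 1) \<Longrightarrow> (-1)^(i - 1) * w x \<ge> 0"
    and x: "y (2 * s) \<le> x" "x \<le> y 0"
  shows "w x * g x \<ge> 0"
proof -
  from cover[OF x] show ?thesis
  proof
    assume "\<exists>j\<le>2 * s. x = y j"
    then show ?thesis using g_zero by auto
  next
    assume "\<exists>i. 1 \<le> i \<and> i \<le> 2 * s \<and> y i < x \<and> x < y (i - 1)"
    then obtain i where i: "1 \<le> i" "i \<le> 2 * s" "y i < x" "x < y (i - 1)" by blast
    have A: "(-1)^(i - 1) * w x * ((-1)^(i - 1) * g x) \<ge> 0"
      using Hs[OF i] g_sign[OF i] by simp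
    have B: "(-1)^(i - 1) * w x * ((-1)^(i - 1) * g x) = ((-1::real)^(i - 1))^2 * (w x * g x)"
      by (simp add: power2_eq_square algebra_simps)
    have C: "((-1::real)^m)^2 = 1" for m :: nat by (induction m) (auto simp: power2_eq_square)
    show ?thesis using A unfolding B C by simp
  qed
qed

lemma w_zero:
  assumes Hs: "\<And>i x. 1 \<le> i \<Longrightarrow> i \<le> 2 * s \<Longrightarrow> y i < x \<Longrightarrow> x < y (i - 1) \<Longrightarrow> (-1)^(i - 1) * w x \<ge> 0"
    and cw: "continuous_on UNIV w" and pw: "per w"
    and j: "j \<le> 2 * s"
  shows "w (y j) = 0"
proof -
  have ic: "isCont (\<lambda>z. c * w z) p" for c p
    using cw by (intro continuous_intros) (simp add: continuous_on_eq_continuous_at)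
  have right: "(-1)^(k - 1) * w (y k) \<ge> 0" if k: "1 \<le> k" "k \<le> 2 * s" for k
  proof (rule cont_side_right[OF ic, where e = "y (k - 1) - y k"])
    show "y (k - 1) - y k > 0" using k by (intro ylt[THEN diff_gt_0_iff_gt[THEN iffD2]]) auto
    show "(-1)^(k - 1) * w z \<ge> 0" if "y k < z" "z < y k + (y (k - 1) - y k)" for z
      using Hs[OF k] that by auto
  qed
  have left: "(-1)^(k - 1) * w (y (k - 1)) \<ge> 0" if k: "1 \<le> k" "k \<le> 2 * s" for k
  proof (rule cont_side_left[OF ic, where e = "y (k - 1) - y k"])
    show "y (k - 1) - y k > 0" using k by (intro ylt[THEN diff_gt_0_iff_gt[THEN iffD2]]) auto
    show "(-1)^(k - 1) * w z \<ge> 0" if "y (k - 1) - (y (k - 1) - y k) < z" "z < y (k - 1)" for z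
      using Hs[OF k] that by auto
  qed
  have end0: "w (y 0) = 0"
  proof -
    have "w (y 0) \<ge> 0" using left[of 1] s1 by simp
    moreover have "(-1)^(2 * s - 1) * w (y (2 * s)) \<ge> 0" using right[of "2 * s"] s1 by simp
    moreover have "(-1::real)^(2 * s - 1) = -1"
    proof -
      have "odd (2 * s - 1)" using s1 by simp
      then show ?thesis by simp
    qed
    moreover have "w (y 0) = w (y (2 * s))" using yp pw by (simp add: per_def)
    ultimately show ?thesis by simp
  qed
  show ?thesis
  proof (cases "j = 0 \<or> j = 2 * s")
    case True
    then show ?thesis using end0 yp pw by (auto simp: per_def)
  next
    case False
    then have j1: "1 \<le> j" "j < 2 * s" using j by auto
    have "(-1)^(j - 1) * w (y j) \<ge> 0" using right[of j] j1 by simp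
    moreover have "(-1)^(Suc j - 1) * w (y (Suc j - 1)) \<ge> 0" using left[of "Suc j"] j1 by simp
    moreover have "(-1::real)^(Suc j - 1) = - ((-1)^(j - 1))" using j1
      by (metis Suc_diff_1 diff_Suc_1 less_le_trans power_Suc mult_minus1 zero_less_one)
    ultimately have "(-1)^(j - 1) * w (y j) = 0" by simp
    then show ?thesis by simp
  qed
qed

definition eta1 :: real where "eta1 = min (d0 / 2) (1 / (4 * real s))"

lemma eta1: "eta1 > 0" "eta1 \<le> d0 / 2" "4 * real s * eta1 \<le> 1" "eta1 \<le> 1"
proof -
  have "1 / (4 * real s) \<le> 1" using s1 by (simp add: field_simps)
  then show "eta1 \<le> 1" unfolding eta1_def by linarith
  show "eta1 > 0" using d0_pos s1 by (simp add: eta1_def)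
  show "eta1 \<le> d0 / 2" by (simp add: eta1_def)
  have "eta1 \<le> 1 / (4 * real s)" by (simp add: eta1_def)
  then show "4 * real s * eta1 \<le> 1" using s1 by (simp add: field_simps)
qed

lemma split3:
  fixes h :: "real \<Rightarrow> real"
  assumes "continuous_on {p..r} h" "p \<le> p'" "p' \<le> r'" "r' \<le> r"
  shows "integral {p..r} h = integral {p..p'} h + integral {p'..r'} h + integral {r'..r} h"
proof -
  have i1: "h integrable_on {p..r}" by (rule integrable_continuous_interval[OF assms(1)])
  have i2: "h integrable_on {p'..r}"
    by (rule integrable_continuous_interval, rule continuous_on_subset[OF assms(1)]) (use assms in auto)
  have "integral {p..p'} h + integral {p'..r} h = integral {p..r} h"
    by (rule Henstock_Kurzweil_Integration.integral_combine) (use assms i1 in auto)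
  moreover have "integral {p'..r'} h + integral {r'..r} h = integral {p'..r} h"
    by (rule Henstock_Kurzweil_Integration.integral_combine) (use assms i2 in auto)
  ultimately show ?thesis by simp
qed

lemma int_const_bound:
  fixes h :: "real \<Rightarrow> real"
  assumes "continuous_on {u..v} h" "u \<le> v" "\<And>x. x \<in> {u..v} \<Longrightarrow> h x \<le> C"
  shows "integral {u..v} h \<le> C * (v - u)"
proof -
  have "integral {u..v} h \<le> integral {u..v} (\<lambda>x. C)"
    by (intro integral_le integrable_continuous_interval assms continuous_intros) (use assms in auto)
  then show ?thesis using assms by (simp add: mult.commute)
qed

lemma est:
  assumes n: "n \<ge> 1" and W: "intfreq n Wl"
    and wg: "\<And>x. y (2 * s) \<le> x \<Longrightarrow> x \<le> y 0 \<Longrightarrow> teval Wl x * g x \<ge> 0"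
    and wz: "\<And>j. j \<le> 2 * s \<Longrightarrow> teval Wl (y j) = 0"
  shows "integral {y (2 * s)..y 0} (\<lambda>x. \<bar>teval Wl x\<bar>) \<le> 4 * real n / (cg * eta1) * integral {y (2 * s)..y 0} (\<lambda>x. teval Wl x * g x)"
proof -
  define w where "w = teval Wl"
  define I where "I = integral {y (2 * s)..y 0} (\<lambda>x. \<bar>w x\<bar>)"
  define La where "La = integral {y (2 * s)..y 0} (\<lambda>x. w x * g x)"
  define \<eta> where "\<eta> = eta1 / (real n + 1)"
  define Lc where "Lc = real n * (real n + 1) / (2 * pi) * I"
  have cw: "continuous_on S w" for S unfolding w_def by (rule teval_cont)
  have cg': "continuous_on S g" for S unfolding teval_gl[symmetric, abs_def] by (rule teval_cont)
  have e1: "\<eta> > 0" "\<eta> \<le> eta1" using eta1 n by (auto simp: \<eta>_def field_simps)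
  have eta: "\<eta> > 0" "\<eta> \<le> eta1" "\<eta> \<le> d0 / 2" using e1 eta1 by auto
  have I0: "I \<ge> 0" unfolding I_def by (intro integral_nonneg integrable_continuous_interval continuous_intros cw) auto
  have La0: "La \<ge> 0" unfolding La_def using wg
    by (intro integral_nonneg integrable_continuous_interval continuous_intros cw cg') (auto simp: w_def)
  have Lc0: "Lc \<ge> 0" using I0 by (simp add: Lc_def)
  have lip: "\<bar>w x\<bar> \<le> Lc * \<bar>x - y j\<bar>" if "j \<le> 2 * s" for x j
  proof -
    have "\<bar>w x - w (y j)\<bar> \<le> real n * (real n + 1) * \<bar>x - y j\<bar> / (2*pi) * integral {y (2 * s)..y (2 * s)+2*pi} (\<lambda>t. \<bar>w t\<bar>)"
      unfolding w_def by (rule teval_lip[OF W])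
    moreover have "y (2 * s) + 2 * pi = y 0" using yp by simp
    ultimately show ?thesis using wz[OF that] by (simp add: Lc_def I_def w_def field_simps)
  qed
  have arc: "integral {y i..y (i - 1)} (\<lambda>x. \<bar>w x\<bar>) \<le> 2 * Lc * \<eta>^2 + integral {y i..y (i - 1)} (\<lambda>x. w x * g x) / (cg * \<eta>)"
    if i: "1 \<le> i" "i \<le> 2 * s" for i
  proof -
    have gap: "y (i - 1) - y i \<ge> d0" using i by (intro d0_le) auto
    have ord: "y i \<le> y i + \<eta>" "y i + \<eta> \<le> y (i - 1) - \<eta>" "y (i - 1) - \<eta> \<le> y (i - 1)" using eta gap by auto
    have inr: "y (2 * s) \<le> y i" "y (i - 1) \<le> y 0" using i by (auto intro!: ymono)
    have "integral {y i..y (i - 1)} (\<lambda>x. \<bar>w x\<bar>) = integral {y i..y i + \<eta>} (\<lambda>x. \<bar>w x\<bar>)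
        + integral {y i + \<eta>..y (i - 1) - \<eta>} (\<lambda>x. \<bar>w x\<bar>) + integral {y (i - 1) - \<eta>..y (i - 1)} (\<lambda>x. \<bar>w x\<bar>)"
      by (rule split3) (use ord in \<open>auto intro!: continuous_intros cw\<close>)
    moreover have "integral {y i..y i + \<eta>} (\<lambda>x. \<bar>w x\<bar>) \<le> (Lc * \<eta>) * (y i + \<eta> - y i)"
    proof (rule int_const_bound)
      fix x assume "x \<in> {y i..y i + \<eta>}"
      then have "\<bar>x - y i\<bar> \<le> \<eta>" by auto
      then show "\<bar>w x\<bar> \<le> Lc * \<eta>" using lip[of i x] i Lc0 by (meson mult_left_mono order_trans)
    qed (use eta in \<open>auto intro!: continuous_intros cw\<close>)
    moreover have "integral {y (i - 1) - \<eta>..y (i - 1)} (\<lambda>x. \<bar>w x\<bar>) \<le> (Lc * \<eta>) * (y (i - 1) - (y (i - 1) - \<eta>))"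
    proof (rule int_const_bound)
      fix x assume "x \<in> {y (i - 1) - \<eta>..y (i - 1)}"
      then have "\<bar>x - y (i - 1)\<bar> \<le> \<eta>" by auto
      then show "\<bar>w x\<bar> \<le> Lc * \<eta>" using lip[of "i - 1" x] i Lc0 by (meson mult_left_mono order_trans diff_le_self le_trans)
    qed (use eta in \<open>auto intro!: continuous_intros cw\<close>)
    moreover have "integral {y i + \<eta>..y (i - 1) - \<eta>} (\<lambda>x. \<bar>w x\<bar>) \<le> integral {y i..y (i - 1)} (\<lambda>x. w x * g x) / (cg * \<eta>)"
    proof -
      have cgp: "cg * \<eta> > 0" using cg_pos eta by simp
      have "integral {y i + \<eta>..y (i - 1) - \<eta>} (\<lambda>x. \<bar>w x\<bar>) \<le> integral {y i + \<eta>..y (i - 1) - \<eta>} (\<lambda>x. w x * g x * (1 / (cg * \<eta>)))"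
      proof (rule integral_le)
        fix x assume x: "x \<in> {y i + \<eta>..y (i - 1) - \<eta>}"
        have glb: "\<bar>g x\<bar> \<ge> cg * \<eta>" by (rule g_lb) (use i eta x in auto)
        have "w x * g x \<ge> 0" unfolding w_def by (rule wg) (use x inr eta in auto)
        then have "\<bar>w x\<bar> * \<bar>g x\<bar> = w x * g x" by (simp add: abs_mult[symmetric])
        moreover have "\<bar>w x\<bar> * (cg * \<eta>) \<le> \<bar>w x\<bar> * \<bar>g x\<bar>" by (intro mult_left_mono glb) auto
        ultimately show "\<bar>w x\<bar> \<le> w x * g x * (1 / (cg * \<eta>))" using cgp by (simp add: field_simps)
      qed (use cg_pos e1 in \<open>auto intro!: integrable_continuous_interval continuous_intros cw cg'\<close>)
      also have "\<dots> = integral {y i + \<eta>..y (i - 1) - \<eta>} (\<lambda>x. w x * g x) / (cg * \<eta>)" by simp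
      also have "\<dots> \<le> integral {y i..y (i - 1)} (\<lambda>x. w x * g x) / (cg * \<eta>)"
      proof (intro divide_right_mono integral_subset_le)
        show "\<forall>x\<in>{y i..y (i - 1)}. 0 \<le> w x * g x" using wg inr unfolding w_def by auto
      qed (use ord cgp cg_pos eta in \<open>auto intro!: integrable_continuous_interval continuous_intros cw cg'\<close>)
      finally show ?thesis .
    qed
    ultimately show ?thesis by (simp add: power2_eq_square)
  qed
  have "I = (\<Sum>i=1..2 * s. integral {y i..y (i - 1)} (\<lambda>x. \<bar>w x\<bar>))"
    unfolding I_def by (rule arcsum) (auto intro!: continuous_intros cw)
  also have "\<dots> \<le> (\<Sum>i=1..2 * s. 2 * Lc * \<eta>^2 + integral {y i..y (i - 1)} (\<lambda>x. w x * g x) / (cg * \<eta>))"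
    by (intro sum_mono arc) auto
  also have "\<dots> = 2 * real s * (2 * Lc * \<eta>^2) + La / (cg * \<eta>)"
  proof -
    have "La = (\<Sum>i=1..2 * s. integral {y i..y (i - 1)} (\<lambda>x. w x * g x))"
      unfolding La_def by (rule arcsum) (auto intro!: continuous_intros cw cg')
    then show ?thesis by (simp add: sum.distrib sum_divide_distrib)
  qed
  finally have m: "I \<le> 4 * real s * Lc * \<eta>^2 + La / (cg * \<eta>)" by simp
  have "4 * real s * Lc * \<eta>^2 \<le> I / 2"
  proof -
    have "4 * real s * Lc * \<eta>^2 = (real n / (real n + 1)) * ((4 * real s * eta1) * eta1) * I / (2 * pi)"
    proof -
      have np: "real n + 1 \<noteq> 0" by simp
      show ?thesis unfolding Lc_def \<eta>_def using np by (simp add: power2_eq_square divide_simps)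
    qed
    also have "\<dots> \<le> 1 * (1 * 1) * I / (2 * pi)"
    proof (intro divide_right_mono mult_right_mono mult_mono)
      show "real n / (real n + 1) \<le> 1" by simp
      show "4 * real s * eta1 \<le> 1" by (rule eta1)
      show "eta1 \<le> 1" by (rule eta1)
    qed (use I0 eta1 pi_gt_zero in auto)
    also have "\<dots> \<le> I / 2"
    proof -
      have "I * 1 \<le> I * pi" by (rule mult_left_mono) (use I0 pi_ge_two in auto)
      then show ?thesis using I0 pi_ge_two by (simp add: field_simps)
    qed
    finally show ?thesis .
  qed
  with m have "I \<le> 2 * (La / (cg * \<eta>))" by linarith
  also have "\<dots> = 2 * (real n + 1) / (cg * eta1) * La" by (simp add: \<eta>_def field_simps)
  also have "\<dots> \<le> 4 * real n / (cg * eta1) * La"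
    using La0 n cg_pos eta1 by (intro mult_right_mono divide_right_mono) auto
  finally show ?thesis by (simp add: I_def La_def w_def)
qed

end

definition SI :: "real \<Rightarrow> (real \<Rightarrow> real) \<Rightarrow> real \<Rightarrow> real" where
  "SI a P x = (if a \<le> x then integral {a..x} P else - integral {x..a} P)"

definition prim :: "real \<Rightarrow> (real \<Rightarrow> real) \<Rightarrow> real \<Rightarrow> real" where
  "prim a P x = SI a P x - integral {a..a+2*pi} (SI a P) / (2*pi)"

lemma SI_shift:
  assumes cP: "continuous_on UNIV P" and cx: "c \<le> x"
  shows "SI a P x = SI a P c + integral {c..x} P"
proof -
  have int: "P integrable_on {u..v}" for u v by (rule integrable_continuous_interval, rule continuous_on_subset[OF cP]) auto
  have comb: "integral {u..v} P + integral {v..w} P = integral {u..w} P" if "u \<le> v" "v \<le> w" for u v w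
    by (rule Henstock_Kurzweil_Integration.integral_combine) (use that int in auto)
  consider "a \<le> c" | "c < a" "a \<le> x" | "x < a" using cx by linarith
  then show ?thesis
  proof cases
    case 1
    then have "SI a P x = integral {a..x} P" "SI a P c = integral {a..c} P" using cx by (auto simp: SI_def)
    moreover have "integral {a..c} P + integral {c..x} P = integral {a..x} P" using 1 cx by (intro comb)
    ultimately show ?thesis by linarith
  next
    case 2
    then have "SI a P x = integral {a..x} P" "SI a P c = - integral {c..a} P" by (auto simp: SI_def)
    moreover have "integral {c..a} P + integral {a..x} P = integral {c..x} P" using 2 by (intro comb) auto
    ultimately show ?thesis by linarith
  next
    case 3
    then have "SI a P x = - integral {x..a} P" "SI a P c = - integral {c..a} P" using cx by (auto simp: SI_def)
    moreover have "integral {c..x} P + integral {x..a} P = integral {c..a} P" using 3 cx by (intro comb) auto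
    ultimately show ?thesis by linarith
  qed
qed

lemma SI_deriv:
  assumes cP: "continuous_on UNIV P"
  shows "(SI a P has_real_derivative P x) (at x)"
proof -
  have "((\<lambda>u. integral {x - 1..u} P) has_vector_derivative P x) (at x within {x - 1..x + 1})"
    by (rule integral_has_vector_derivative) (auto intro: continuous_on_subset[OF cP])
  then have "((\<lambda>u. integral {x - 1..u} P) has_real_derivative P x) (at x within {x - 1<..<x + 1})"
    unfolding has_real_derivative_iff_has_vector_derivative
    by (rule has_vector_derivative_within_subset) auto
  then have "((\<lambda>u. integral {x - 1..u} P) has_real_derivative P x) (at x)"
    by (subst (asm) at_within_open) auto
  then have "((\<lambda>u. SI a P (x - 1) + integral {x - 1..u} P) has_real_derivative P x) (at x)"
    by (auto intro!: derivative_eq_intros)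
  then show ?thesis
  proof (rule has_field_derivative_transform_within_open[where S = "{x - 1<..<x + 1}"])
    show "\<And>u. u \<in> {x - 1<..<x + 1} \<Longrightarrow> SI a P (x - 1) + integral {x - 1..u} P = SI a P u"
    proof -
      fix u assume "u \<in> {x - 1<..<x + 1}"
      then have "x - 1 \<le> u" by simp
      from SI_shift[OF cP this] show "SI a P (x - 1) + integral {x - 1..u} P = SI a P u" by simp
    qed
  qed auto
qed

lemma SI_per:
  assumes cP: "continuous_on UNIV P" and pP: "per P" and mP: "integral {a..a+2*pi} P = 0"
  shows "per (SI a P)"
proof -
  have "((\<lambda>x. SI a P (x + 2*pi) - SI a P x) has_real_derivative 0) (at x)" for x
  proof -
    have dg: "((\<lambda>y. y + 2*pi) has_real_derivative 1) (at x)" by (auto intro!: derivative_eq_intros)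
    have "((\<lambda>x. SI a P (x + 2*pi)) has_real_derivative P (x + 2*pi) * 1) (at x)"
      using DERIV_chain2[where f="SI a P" and g="\<lambda>y. y + 2*pi" and x=x, OF SI_deriv[OF cP] dg] .
    then have "((\<lambda>x. SI a P (x + 2*pi) - SI a P x) has_real_derivative P (x + 2*pi) * 1 - P x) (at x)"
      by (intro DERIV_diff SI_deriv[OF cP])
    then show ?thesis using pP by (simp add: per_def)
  qed
  then have "SI a P (x + 2*pi) - SI a P x = SI a P (a + 2*pi) - SI a P a" for x
    by (rule DERIV_isconst_all[rule_format])
  moreover have "SI a P (a + 2*pi) - SI a P a = 0" using mP pi_gt_zero by (simp add: SI_def)
  ultimately show ?thesis by (simp add: per_def)
qed

lemma prim_props:
  assumes cP: "continuous_on UNIV P" and pP: "per P" and mP: "integral {a..a+2*pi} P = 0"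
  shows "\<And>x. (prim a P has_real_derivative P x) (at x)"
    and "continuous_on UNIV (prim a P)" and "per (prim a P)"
    and "integral {a..a+2*pi} (prim a P) = 0"
proof -
  show d: "(prim a P has_real_derivative P x) (at x)" for x
    unfolding prim_def[abs_def] using SI_deriv[OF cP] by (auto intro!: derivative_eq_intros)
  show "continuous_on UNIV (prim a P)"
    using d by (meson DERIV_isCont continuous_at_imp_continuous_on)
  show "per (prim a P)" using SI_per[OF assms] by (simp add: per_def prim_def)
  have cS: "continuous_on UNIV (SI a P)"
    using SI_deriv[OF cP] by (meson DERIV_isCont continuous_at_imp_continuous_on)
  have "integral {a..a+2*pi} (prim a P) = integral {a..a+2*pi} (SI a P) - integral {a..a+2*pi} (\<lambda>x. integral {a..a+2*pi} (SI a P) / (2*pi))"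
    unfolding prim_def[abs_def]
    by (rule integral_diff) (auto intro!: integrable_continuous_interval continuous_on_subset[OF cS])
  also have "\<dots> = 0" using pi_gt_zero by simp
  finally show "integral {a..a+2*pi} (prim a P) = 0" .
qed

fun Pk :: "real \<Rightarrow> (real \<Rightarrow> real) \<Rightarrow> nat \<Rightarrow> real \<Rightarrow> real" where
  "Pk a F 0 = F"
| "Pk a F (Suc k) = prim a (Pk a F k)"

lemma Pk_props:
  assumes cF: "continuous_on UNIV F" and pF: "per F" and mF: "integral {a..a+2*pi} F = 0"
  shows "continuous_on UNIV (Pk a F k) \<and> per (Pk a F k) \<and> integral {a..a+2*pi} (Pk a F k) = 0"
proof (induction k)
  case 0 thus ?case using assms by simp
next
  case (Suc k) thus ?case using prim_props[of "Pk a F k" a] by simp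
qed

lemma Pk_deriv:
  assumes cF: "continuous_on UNIV F" and pF: "per F" and mF: "integral {a..a+2*pi} F = 0"
  shows "(Pk a F (Suc k) has_real_derivative Pk a F k x) (at x)"
  using prim_props(1)[of "Pk a F k" a x] Pk_props[OF assms, of k] by simp


lemma maxmin_lip:
  fixes u v u' v' :: real
  shows "\<bar>max 0 (min u v) - max 0 (min u' v')\<bar> \<le> max \<bar>u - u'\<bar> \<bar>v - v'\<bar>"
  by (simp add: max_def min_def abs_if) linarith?

context pts begin

definition L1 :: real where "L1 = y 0 - y 1"
definition L2 :: real where "L2 = y 1 - y 2"
definition tent :: "real \<Rightarrow> real" where
  "tent t = max 0 (min (L1 * (t - y 2)) (L2 * (y 0 - t))) / 4"
definition red :: "real \<Rightarrow> real" where
  "red x = x - 2 * pi * of_int \<lfloor>(x - y (2 * s)) / (2 * pi)\<rfloor>"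
definition F0 :: "real \<Rightarrow> real" where "F0 x = tent (red x)"
definition m0 :: real where "m0 = integral {y (2 * s)..y (2 * s) + 2 * pi} F0 / (2 * pi)"
definition FF :: "real \<Rightarrow> real" where "FF x = F0 x - m0"

lemma L12: "L1 > 0" "L2 > 0" "L1 + L2 \<le> 2 * pi" "y (2 * s) \<le> y 2"
proof -
  show "L1 > 0" using ylt[of 0 1] s1 by (simp add: L1_def)
  show "L2 > 0" using ylt[of 1 2] s1 by (simp add: L2_def)
  show y2: "y (2 * s) \<le> y 2" using s1 by (intro ymono) auto
  show "L1 + L2 \<le> 2 * pi" using y2 yp by (simp add: L1_def L2_def)
qed

lemma tent_lip: "\<bar>tent t - tent t'\<bar> \<le> 2 * \<bar>t - t'\<bar>"
proof -
  have A: "\<bar>L1 * (t - y 2) - L1 * (t' - y 2)\<bar> \<le> 2 * pi * \<bar>t - t'\<bar>"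
  proof -
    have "\<bar>L1 * (t - y 2) - L1 * (t' - y 2)\<bar> = L1 * \<bar>t - t'\<bar>"
      using L12 by (simp add: right_diff_distrib[symmetric] abs_mult)
    also have "\<dots> \<le> 2 * pi * \<bar>t - t'\<bar>" using L12 by (intro mult_right_mono) auto
    finally show ?thesis .
  qed
  have B: "\<bar>L2 * (y 0 - t) - L2 * (y 0 - t')\<bar> \<le> 2 * pi * \<bar>t - t'\<bar>"
  proof -
    have "\<bar>L2 * (y 0 - t) - L2 * (y 0 - t')\<bar> = L2 * \<bar>t - t'\<bar>"
      using L12 by (simp add: right_diff_distrib[symmetric] abs_mult abs_minus_commute)
    also have "\<dots> \<le> 2 * pi * \<bar>t - t'\<bar>" using L12 by (intro mult_right_mono) auto
    finally show ?thesis .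
  qed
  have "\<bar>tent t - tent t'\<bar> = \<bar>max 0 (min (L1 * (t - y 2)) (L2 * (y 0 - t))) - max 0 (min (L1 * (t' - y 2)) (L2 * (y 0 - t')))\<bar> / 4"
    unfolding tent_def by (simp add: diff_divide_distrib[symmetric])
  also have "\<dots> \<le> max \<bar>L1 * (t - y 2) - L1 * (t' - y 2)\<bar> \<bar>L2 * (y 0 - t) - L2 * (y 0 - t')\<bar> / 4"
    by (intro divide_right_mono maxmin_lip) auto
  also have "\<dots> \<le> 2 * pi * \<bar>t - t'\<bar> / 4" using A B by (intro divide_right_mono) auto
  also have "\<dots> \<le> 2 * \<bar>t - t'\<bar>"
  proof -
    have "pi * \<bar>t - t'\<bar> \<le> 4 * \<bar>t - t'\<bar>" by (rule mult_right_mono) (use pi_less_4 in auto)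
    then show ?thesis by simp
  qed
  finally show ?thesis .
qed

lemma tent_ends: "tent (y (2 * s)) = 0" "tent (y 0) = 0"
proof -
  have "L1 * (y (2 * s) - y 2) \<le> 0" using L12 by (simp add: mult_nonneg_nonpos)
  then show "tent (y (2 * s)) = 0" unfolding tent_def by simp
  show "tent (y 0) = 0" unfolding tent_def by simp
qed

lemma cell:
  fixes k :: int
  assumes "y (2 * s) + 2 * pi * k \<le> x" "x \<le> y (2 * s) + 2 * pi * (k + 1)"
  shows "F0 x = tent (x - 2 * pi * k)"
proof (cases "x < y (2 * s) + 2 * pi * (k + 1)")
  case True
  have "\<lfloor>(x - y (2 * s)) / (2 * pi)\<rfloor> = k"
    by (rule floor_unique) (use assms True pi_gt_zero in \<open>auto simp: field_simps\<close>)
  then show ?thesis by (simp add: F0_def red_def)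
next
  case False
  then have x: "x = y (2 * s) + 2 * pi * (k + 1)" using assms by simp
  have "\<lfloor>(x - y (2 * s)) / (2 * pi)\<rfloor> = k + 1"
    by (rule floor_unique) (use x pi_gt_zero in auto)
  then have "red x = y (2 * s)" by (simp add: red_def x)
  moreover have "x - 2 * pi * k = y 0" using x yp by (simp add: algebra_simps)
  ultimately show ?thesis using tent_ends by (simp add: F0_def)
qed

lemma in_cell:
  fixes x :: real
  defines "k \<equiv> \<lfloor>(x - y (2 * s)) / (2 * pi)\<rfloor>"
  shows "y (2 * s) + 2 * pi * k \<le> x" "x < y (2 * s) + 2 * pi * (k + 1)"
proof -
  have "of_int k \<le> (x - y (2 * s)) / (2 * pi)" "(x - y (2 * s)) / (2 * pi) < of_int k + 1"
    unfolding k_def by linarith+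
  then show "y (2 * s) + 2 * pi * k \<le> x" "x < y (2 * s) + 2 * pi * (k + 1)"
    using pi_gt_zero by (auto simp: field_simps)
qed

lemma F0_lip: "\<bar>F0 x - F0 z\<bar> \<le> 2 * \<bar>x - z\<bar>"
proof -
  have main: "\<bar>F0 x - F0 z\<bar> \<le> 2 * (z - x)" if xz: "x \<le> z" for x z
  proof -
    define kx where "kx = \<lfloor>(x - y (2 * s)) / (2 * pi)\<rfloor>"
    define kz where "kz = \<lfloor>(z - y (2 * s)) / (2 * pi)\<rfloor>"
    have cx: "y (2 * s) + 2 * pi * kx \<le> x" "x < y (2 * s) + 2 * pi * (kx + 1)" using in_cell unfolding kx_def by auto
    have cz: "y (2 * s) + 2 * pi * kz \<le> z" "z < y (2 * s) + 2 * pi * (kz + 1)" using in_cell unfolding kz_def by auto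
    have "kx \<le> kz" unfolding kx_def kz_def using xz pi_gt_zero by (intro floor_mono divide_right_mono) auto
    show ?thesis
    proof (cases "kx = kz")
      case True
      have "F0 x = tent (x - 2 * pi * kx)" using cx by (intro cell) auto
      moreover have "F0 z = tent (z - 2 * pi * kx)" using cz True by (intro cell) auto
      ultimately show ?thesis using tent_lip[of "x - 2 * pi * kx" "z - 2 * pi * kx"] xz by simp
    next
      case False
      then have lt: "kx + 1 \<le> kz" using \<open>kx \<le> kz\<close> by simp
      define c1 where "c1 = y (2 * s) + 2 * pi * (kx + 1)"
      define c2 where "c2 = y (2 * s) + 2 * pi * kz"
      have c12: "c1 \<le> c2" unfolding c1_def c2_def using lt pi_gt_zero
        by (simp add: mult_left_mono)
      have "F0 c1 = tent (c1 - 2 * pi * kx)" using cx by (intro cell) (auto simp: c1_def)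
      also have "c1 - 2 * pi * kx = y 0" using yp by (simp add: c1_def algebra_simps)
      finally have f1: "F0 c1 = 0" using tent_ends by simp
      have "F0 c2 = tent (c2 - 2 * pi * kz)" using cz by (intro cell) (auto simp: c2_def)
      then have f2: "F0 c2 = 0" using tent_ends by (simp add: c2_def)
      have "F0 x = tent (x - 2 * pi * kx)" using cx by (intro cell) auto
      moreover have "F0 c1 = tent (c1 - 2 * pi * kx)" using cx by (intro cell) (auto simp: c1_def)
      ultimately have "\<bar>F0 x - F0 c1\<bar> \<le> 2 * (c1 - x)" using tent_lip[of "x - 2 * pi * kx" "c1 - 2 * pi * kx"] cx
        by (simp add: c1_def)
      moreover have "F0 z = tent (z - 2 * pi * kz)" using cz by (intro cell) auto
      moreover have "F0 c2 = tent (c2 - 2 * pi * kz)" using cz by (intro cell) (auto simp: c2_def)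
      ultimately have "\<bar>F0 x - F0 c1\<bar> \<le> 2 * (c1 - x)" "\<bar>F0 c2 - F0 z\<bar> \<le> 2 * (z - c2)"
        using tent_lip[of "c2 - 2 * pi * kz" "z - 2 * pi * kz"] cz by (auto simp: c2_def)
      moreover have "\<bar>F0 x - F0 z\<bar> \<le> \<bar>F0 x - F0 c1\<bar> + \<bar>F0 c2 - F0 z\<bar>"
        using f1 f2 abs_triangle_ineq4[of "F0 x" "F0 z"] by simp
      ultimately have "\<bar>F0 x - F0 z\<bar> \<le> 2 * (c1 - x) + 2 * (z - c2)" by linarith
      also have "\<dots> \<le> 2 * (z - x)" using c12 by simp
      finally show ?thesis .
    qed
  qed
  show ?thesis
  proof (cases "x \<le> z")
    case True thus ?thesis using main[of x z] by simp
  next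
    case False thus ?thesis using main[of z x] by (simp add: abs_minus_commute)
  qed
qed

lemma FF_lip: "\<bar>FF x - FF z\<bar> \<le> 2 * \<bar>x - z\<bar>"
  using F0_lip by (simp add: FF_def)

lemma FF_cont: "continuous_on UNIV FF"
proof (rule lipschitz_on_continuous_on)
  show "2-lipschitz_on UNIV FF" by (rule lipschitz_onI) (auto simp: dist_real_def FF_lip)
qed

lemma red_per: "red (x + 2 * pi) = red x"
proof -
  have "(x + 2 * pi - y (2 * s)) / (2 * pi) = (x - y (2 * s)) / (2 * pi) + of_int 1"
    using pi_gt_zero by (simp add: field_simps)
  then have "\<lfloor>(x + 2 * pi - y (2 * s)) / (2 * pi)\<rfloor> = \<lfloor>(x - y (2 * s)) / (2 * pi)\<rfloor> + 1"
    by (metis floor_add_int)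
  then show ?thesis by (simp add: red_def algebra_simps)
qed

lemma FF_per: "per FF" by (simp add: per_def FF_def F0_def red_per)

lemma FF_mean: "integral {y (2 * s)..y (2 * s) + 2 * pi} FF = 0"
proof -
  have cF0: "continuous_on UNIV F0"
  proof (rule lipschitz_on_continuous_on)
    show "2-lipschitz_on UNIV F0" by (rule lipschitz_onI) (auto simp: dist_real_def F0_lip)
  qed
  have "integral {y (2 * s)..y (2 * s) + 2 * pi} FF = integral {y (2 * s)..y (2 * s) + 2 * pi} F0 - integral {y (2 * s)..y (2 * s) + 2 * pi} (\<lambda>x. m0)"
    unfolding FF_def[abs_def]
    by (rule integral_diff) (auto intro!: integrable_continuous_interval continuous_on_subset[OF cF0])
  also have "\<dots> = 0" using pi_gt_zero by (simp add: m0_def)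
  finally show ?thesis .
qed

definition alpha :: "nat \<Rightarrow> real" where
  "alpha i = (if i = 1 then - L2 / 4 else if i = 2 then L1 / 4 else 0)"
definition beta :: "nat \<Rightarrow> real" where
  "beta i = (if i = 1 then L2 * y 0 / 4 else if i = 2 then - L1 * y 2 / 4 else 0) - m0"

lemma FF_arc:
  assumes i: "1 \<le> i" "i \<le> 2 * s" and x: "y i \<le> x" "x \<le> y (i - 1)"
  shows "FF x = alpha i * x + beta i"
proof -
  have xr: "y (2 * s) \<le> x" "x \<le> y 0" using x i by (auto intro: order_trans[OF ymono] order_trans[OF _ ymono])
  have "F0 x = tent (x - 2 * pi * of_int 0)" by (rule cell) (use xr yp in auto)
  then have F0x: "F0 x = tent x" by simp
  have "tent x = alpha i * x + beta i + m0"
  proof -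
    consider "i = 1" | "i = 2" | "i \<ge> 3" using i by linarith
    then show ?thesis
    proof cases
      case 1
      then have xx: "y 1 \<le> x" "x \<le> y 0" using x by auto
      have "L2 * (y 0 - x) \<le> L2 * L1" using xx L12 by (intro mult_left_mono) (auto simp: L1_def)
      moreover have "L1 * L2 \<le> L1 * (x - y 2)" using xx L12 by (intro mult_left_mono) (auto simp: L2_def)
      moreover have "0 \<le> L2 * (y 0 - x)" using xx L12 by simp
      ultimately have "tent x = L2 * (y 0 - x) / 4" unfolding tent_def by (simp add: min_def max_def algebra_simps)
      then show ?thesis using 1 by (simp add: alpha_def beta_def field_simps)
    next
      case 2
      then have xx: "y 2 \<le> x" "x \<le> y 1" using x by auto
      have "L1 * (x - y 2) \<le> L1 * L2" using xx L12 by (intro mult_left_mono) (auto simp: L2_def)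
      moreover have "L2 * L1 \<le> L2 * (y 0 - x)" using xx L12 by (intro mult_left_mono) (auto simp: L1_def)
      moreover have "0 \<le> L1 * (x - y 2)" using xx L12 by simp
      ultimately have "tent x = L1 * (x - y 2) / 4" unfolding tent_def by (simp add: min_def max_def algebra_simps)
      then show ?thesis using 2 by (simp add: alpha_def beta_def field_simps)
    next
      case 3
      have "y (i - 1) \<le> y 2" using 3 i by (intro ymono) auto
      then have "L1 * (x - y 2) \<le> 0" using x L12 by (simp add: mult_nonneg_nonpos)
      then show ?thesis using 3 by (simp add: tent_def alpha_def beta_def)
    qed
  qed
  then show ?thesis by (simp add: FF_def F0x)
qed

end

lemma per_nat: "per h \<Longrightarrow> h (x + 2 * pi * real n) = h x"
proof (induction n)
  case 0 thus ?case by simp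
next
  case (Suc n)
  have "h (x + 2 * pi * real (Suc n)) = h ((x + 2 * pi * real n) + 2 * pi)" by (simp add: algebra_simps)
  also have "\<dots> = h (x + 2 * pi * real n)" using Suc.prems by (simp add: per_def)
  finally show ?case using Suc by simp
qed

lemma per_int: "per h \<Longrightarrow> h (x + 2 * pi * of_int k) = h x"
proof -
  assume p: "per h"
  obtain n where n: "k = int n \<or> k = - int n" by (metis int_cases2)
  then show ?thesis
  proof
    assume "k = int n"
    then have "2 * pi * of_int k = 2 * pi * real n" by simp
    then show ?thesis using per_nat[OF p, of x n] by simp
  next
    assume kn: "k = - int n"
    have "h (x + 2 * pi * of_int k) = h ((x + 2 * pi * of_int k) + 2 * pi * real n)"
      using per_nat[OF p, of "x + 2 * pi * of_int k" n] by simp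
    also have "(x + 2 * pi * of_int k) + 2 * pi * real n = x" using kn by (simp add: algebra_simps)
    finally show ?thesis .
  qed
qed

lemma per_tder: "per (teval vl) \<Longrightarrow> per (teval ((tder ^^ m) vl))"
proof (induction m)
  case 0 thus ?case by simp
next
  case (Suc m)
  show ?case using per_deriv[OF Suc.IH[OF Suc.prems] teval_deriv] by simp
qed

lemma affine_convex: "convex S \<Longrightarrow> convex_on S (\<lambda>x::real. p * x + r)"
  unfolding convex_on_def
proof (intro conjI ballI allI impI)
  fix x y u v :: real assume "u + v = 1"
  then have "u * r + v * r = r" by (metis distrib_right mult_1)
  then show "p * (u *\<^sub>R x + v *\<^sub>R y) + r \<le> u * (p * x + r) + v * (p * y + r)"
    by (simp add: algebra_simps)
qed

lemma telescope: fixes c :: "nat \<Rightarrow> real" shows "(\<Sum>i=1..n. c (i - 1) - c i) = c 0 - c n"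
  by (induction n) auto

context pts begin

abbreviation "aa \<equiv> y (2 * s)"

lemma FF_ae: "AE x in lborel. \<exists>D. (FF has_real_derivative D) (at x) \<and> \<bar>D\<bar> \<le> 2"
proof (rule AE_I')
  define N where "N = range (\<lambda>k::int. aa + 2 * pi * of_int k) \<union> range (\<lambda>k::int. y 2 + 2 * pi * of_int k) \<union> range (\<lambda>k::int. y 1 + 2 * pi * of_int k)"
  show "N \<in> null_sets lborel" unfolding N_def by (intro countable_imp_null_set_lborel) auto
  show "{x \<in> space lborel. \<not> (\<exists>D. (FF has_real_derivative D) (at x) \<and> \<bar>D\<bar> \<le> 2)} \<subseteq> N"
  proof (rule subsetI, rule ccontr)
    fix x assume xin: "x \<in> {x \<in> space lborel. \<not> (\<exists>D. (FF has_real_derivative D) (at x) \<and> \<bar>D\<bar> \<le> 2)}"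
    assume xN: "x \<notin> N"
    define k where "k = \<lfloor>(x - aa) / (2 * pi)\<rfloor>"
    define t where "t = x - 2 * pi * of_int k"
    have tr: "aa \<le> t" "t < aa + 2 * pi" using in_cell[of x] unfolding t_def k_def by (simp_all add: algebra_simps)
    have xe: "x = t + 2 * pi * of_int k" by (simp add: t_def)
    have tne: "t \<noteq> aa" "t \<noteq> y 2" "t \<noteq> y 1"
    proof -
      show "t \<noteq> aa"
      proof
        assume "t = aa"
        then have "x \<in> range (\<lambda>k::int. aa + 2 * pi * of_int k)" using xe by (intro range_eqI[of _ _ k]) simp
        then show False using xN unfolding N_def by blast
      qed
      show "t \<noteq> y 2"
      proof
        assume "t = y 2"
        then have "x \<in> range (\<lambda>k::int. y 2 + 2 * pi * of_int k)" using xe by (intro range_eqI[of _ _ k]) simp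
        then show False using xN unfolding N_def by blast
      qed
      show "t \<noteq> y 1"
      proof
        assume "t = y 1"
        then have "x \<in> range (\<lambda>k::int. y 1 + 2 * pi * of_int k)" using xe by (intro range_eqI[of _ _ k]) simp
        then show False using xN unfolding N_def by blast
      qed
    qed
    have shift: "FF z = FF (z - 2 * pi * of_int k)" for z
      using per_int[OF FF_per, of "z - 2 * pi * of_int k" k] by simp
    have y21: "aa \<le> y 2" "y 2 < y 1" "y 1 < y 0" using L12 ylt[of 1 2] ylt[of 0 1] s1 by auto
    have L: "L1 / 4 \<le> 2" "L2 / 4 \<le> 2" using L12 pi_less_4 by auto
    have "\<exists>D. (FF has_real_derivative D) (at x) \<and> \<bar>D\<bar> \<le> 2"
    proof -
      consider "t < y 2" | "y 2 < t" "t < y 1" | "y 1 < t" using tne by linarith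
      then show ?thesis
      proof cases
        case 1
        define S where "S = {aa + 2 * pi * of_int k<..<y 2 + 2 * pi * of_int k}"
        have xS: "x \<in> S" using 1 tr tne by (auto simp: S_def t_def)
        have eq: "FF z = - m0" if "z \<in> S" for z
        proof -
          have zz: "aa \<le> z - 2 * pi * of_int k" "z - 2 * pi * of_int k \<le> y 2" using that by (auto simp: S_def)
          have "F0 (z - 2 * pi * of_int k) = tent (z - 2 * pi * of_int k - 2 * pi * of_int 0)"
            by (rule cell) (use zz y21 yp in auto)
          moreover have "L1 * (z - 2 * pi * of_int k - y 2) \<le> 0" using zz L12 by (simp add: mult_nonneg_nonpos)
          ultimately have "F0 (z - 2 * pi * of_int k) = 0" by (simp add: tent_def)
          then show ?thesis using shift[of z] by (simp add: FF_def)
        qed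
        have "((\<lambda>z. - m0) has_real_derivative 0) (at x)" by simp
        then have "(FF has_real_derivative 0) (at x)"
          by (rule has_field_derivative_transform_within_open[where S = S]) (use xS eq in \<open>auto simp: S_def\<close>)
        then show ?thesis by auto
      next
        case 2
        define S where "S = {y 2 + 2 * pi * of_int k<..<y 1 + 2 * pi * of_int k}"
        have xS: "x \<in> S" using 2 by (auto simp: S_def t_def)
        have eq: "alpha 2 * (z - 2 * pi * of_int k) + beta 2 = FF z" if "z \<in> S" for z
        proof -
          have "FF (z - 2 * pi * of_int k) = alpha 2 * (z - 2 * pi * of_int k) + beta 2"
            by (rule FF_arc) (use that s1 in \<open>auto simp: S_def\<close>)
          then show ?thesis using shift[of z] by simp
        qed
        have "((\<lambda>z. alpha 2 * (z - 2 * pi * of_int k) + beta 2) has_real_derivative alpha 2) (at x)"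
          by (auto intro!: derivative_eq_intros)
        then have "(FF has_real_derivative alpha 2) (at x)"
          by (rule has_field_derivative_transform_within_open[where S = S]) (use xS eq in \<open>auto simp: S_def\<close>)
        moreover have "\<bar>alpha 2\<bar> \<le> 2" using L L12 by (simp add: alpha_def)
        ultimately show ?thesis by auto
      next
        case 3
        define S where "S = {y 1 + 2 * pi * of_int k<..<aa + 2 * pi + 2 * pi * of_int k}"
        have xS: "x \<in> S" using 3 tr by (auto simp: S_def t_def)
        have eq: "alpha 1 * (z - 2 * pi * of_int k) + beta 1 = FF z" if "z \<in> S" for z
        proof -
          have "FF (z - 2 * pi * of_int k) = alpha 1 * (z - 2 * pi * of_int k) + beta 1"
            by (rule FF_arc) (use that s1 yp in \<open>auto simp: S_def\<close>)
          then show ?thesis using shift[of z] by simp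
        qed
        have "((\<lambda>z. alpha 1 * (z - 2 * pi * of_int k) + beta 1) has_real_derivative alpha 1) (at x)"
          by (auto intro!: derivative_eq_intros)
        then have "(FF has_real_derivative alpha 1) (at x)"
          by (rule has_field_derivative_transform_within_open[where S = S]) (use xS eq in \<open>auto simp: S_def\<close>)
        moreover have "\<bar>alpha 1\<bar> \<le> 2" using L L12 by (simp add: alpha_def)
        ultimately show ?thesis by auto
      qed
    qed
    then show False using xin by auto
  qed
qed

lemma FF_lac: "loc_abs_cont FF"
  unfolding loc_abs_cont_def abs_cont_on_def
proof (intro allI impI)
  fix a b e :: real assume "a \<le> b" "e > 0"
  show "\<exists>d>0. \<forall>(m::nat) (u::nat\<Rightarrow>real) (v::nat\<Rightarrow>real). (\<forall>k<m. a \<le> u k \<and> u k < v k \<and> v k \<le> b) \<and>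
      (\<forall>k l. k < l \<and> l < m \<longrightarrow> v k \<le> u l) \<and> (\<Sum>k<m. v k - u k) < d \<longrightarrow> (\<Sum>k<m. \<bar>FF (v k) - FF (u k)\<bar>) < e"
  proof (intro exI[of _ "e / 2"] conjI allI impI)
    show "e / 2 > 0" using \<open>e > 0\<close> by simp
    fix m :: nat and u v :: "nat \<Rightarrow> real"
    assume H: "(\<forall>k<m. a \<le> u k \<and> u k < v k \<and> v k \<le> b) \<and> (\<forall>k l. k < l \<and> l < m \<longrightarrow> v k \<le> u l) \<and> (\<Sum>k<m. v k - u k) < e / 2"
    have "(\<Sum>k<m. \<bar>FF (v k) - FF (u k)\<bar>) \<le> (\<Sum>k<m. 2 * (v k - u k))"
    proof (rule sum_mono)
      fix k assume "k \<in> {..<m}"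
      then have "u k < v k" using H by auto
      then show "\<bar>FF (v k) - FF (u k)\<bar> \<le> 2 * (v k - u k)" using FF_lip[of "v k" "u k"] by simp
    qed
    also have "\<dots> = 2 * (\<Sum>k<m. v k - u k)" by (simp add: sum_distrib_left)
    also have "\<dots> < e" using H by simp
    finally show "(\<Sum>k<m. \<bar>FF (v k) - FF (u k)\<bar>) < e" .
  qed
qed

lemma pw:
  assumes pv: "per (teval vl)"
  shows "integral {aa..aa + 2 * pi} (\<lambda>x. FF x * teval (tder (tder vl)) x)
         = - (\<Sum>i=1..2 * s. alpha i * (teval vl (y (i - 1)) - teval vl (y i)))"
proof -
  define v where "v = teval vl"
  define v1 where "v1 = teval (tder vl)"
  define v2 where "v2 = teval (tder (tder vl))"
  have pv1: "per v1" unfolding v1_def using per_tder[OF pv, of 1] by simp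
  have cv2: "continuous_on S v2" for S unfolding v2_def by (rule teval_cont)
  have d0': "(v has_real_derivative v1 x) (at x)" for x unfolding v_def v1_def by (rule teval_deriv)
  have d1': "(v1 has_real_derivative v2 x) (at x)" for x unfolding v1_def v2_def by (rule teval_deriv)
  have arc: "integral {y i..y (i - 1)} (\<lambda>x. FF x * v2 x) =
      (FF (y (i - 1)) * v1 (y (i - 1)) - FF (y i) * v1 (y i)) - alpha i * (v (y (i - 1)) - v (y i))"
    if i: "1 \<le> i" "i \<le> 2 * s" for i
  proof -
    have le: "y i \<le> y (i - 1)" using i by (intro ymono) auto
    have "integral {y i..y (i - 1)} (\<lambda>x. FF x * v2 x) = integral {y i..y (i - 1)} (\<lambda>x. (alpha i * x + beta i) * v2 x)"
      by (rule integral_cong) (use FF_arc[OF i] in auto)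
    also have "\<dots> = ((alpha i * y (i - 1) + beta i) * v1 (y (i - 1)) - alpha i * v (y (i - 1)))
                   - ((alpha i * y i + beta i) * v1 (y i) - alpha i * v (y i))"
    proof (rule integral_unique, rule fundamental_theorem_of_calculus[OF le])
      fix x
      have "((\<lambda>x. (alpha i * x + beta i) * v1 x - alpha i * v x) has_real_derivative
             alpha i * v1 x + (alpha i * x + beta i) * v2 x - alpha i * v1 x) (at x)"
        using d0'[of x] d1'[of x] by (auto intro!: derivative_eq_intros)
      then show "((\<lambda>x. (alpha i * x + beta i) * v1 x - alpha i * v x) has_vector_derivative (alpha i * x + beta i) * v2 x) (at x within {y i..y (i - 1)})"
        unfolding has_real_derivative_iff_has_vector_derivative[symmetric]
        by (auto intro: has_field_derivative_at_within)
    qed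
    also have "\<dots> = (FF (y (i - 1)) * v1 (y (i - 1)) - FF (y i) * v1 (y i)) - alpha i * (v (y (i - 1)) - v (y i))"
      using FF_arc[OF i, of "y i"] FF_arc[OF i, of "y (i - 1)"] le by (simp add: algebra_simps)
    finally show ?thesis .
  qed
  have "integral {aa..aa + 2 * pi} (\<lambda>x. FF x * v2 x) = integral {aa..y 0} (\<lambda>x. FF x * v2 x)"
    using yp by simp
  also have "\<dots> = (\<Sum>i=1..2 * s. integral {y i..y (i - 1)} (\<lambda>x. FF x * v2 x))"
    by (rule arcsum) (intro continuous_intros continuous_on_subset[OF FF_cont] cv2; simp)
  also have "\<dots> = (\<Sum>i=1..2 * s. (FF (y (i - 1)) * v1 (y (i - 1)) - FF (y i) * v1 (y i)) - alpha i * (v (y (i - 1)) - v (y i)))"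
    by (intro sum.cong refl arc) auto
  also have "\<dots> = (FF (y 0) * v1 (y 0) - FF aa * v1 aa) - (\<Sum>i=1..2 * s. alpha i * (v (y (i - 1)) - v (y i)))"
  proof -
    have "(\<Sum>i=1..2 * s. (FF (y (i - 1)) * v1 (y (i - 1)) - FF (y i) * v1 (y i)) - alpha i * (v (y (i - 1)) - v (y i)))
      = (\<Sum>i=1..2 * s. FF (y (i - 1)) * v1 (y (i - 1)) - FF (y i) * v1 (y i)) - (\<Sum>i=1..2 * s. alpha i * (v (y (i - 1)) - v (y i)))"
      by (rule sum_subtractf)
    also have "(\<Sum>i=1..2 * s. FF (y (i - 1)) * v1 (y (i - 1)) - FF (y i) * v1 (y i)) = FF (y 0) * v1 (y 0) - FF aa * v1 aa"
      using telescope[of "\<lambda>j. FF (y j) * v1 (y j)" "2 * s"] by simp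
    finally show ?thesis .
  qed
  also have "FF (y 0) * v1 (y 0) - FF aa * v1 aa = 0" using yp FF_per pv1 by (simp add: per_def)
  finally show ?thesis by (simp add: v_def v2_def)
qed

end

locale ptsq = pts +
  fixes q :: nat
  assumes q3: "q \<ge> 3"
begin

definition ff :: "real \<Rightarrow> real" where "ff = Pk aa FF (q - 2)"
definition phil :: "(real \<times> real \<times> real) list" where "phil = [(1, -1, - y 1)]"

lemma yq: "aa + 2 * pi = y 0" using yp by simp

lemma phil_int: "intfreq 1 phil"
  unfolding intfreq_def phil_def by (auto intro!: exI[of _ 1])

lemma phi_eval: "teval phil x = - cos (x - y 1)" by (simp add: phil_def)

lemma phi_bound: "\<bar>teval phil x\<bar> \<le> 1" by (simp add: phi_eval)

lemma gl_per: "per (teval gl)" using g_per by (simp add: teval_gl[abs_def])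

lemma FF3: "continuous_on UNIV FF" "per FF" "integral {aa..aa + 2 * pi} FF = 0"
  using FF_cont FF_per FF_mean by auto

lemma ibp_T:
  assumes "intfreq n Tl" "per (teval vl)"
  shows "integral {aa..aa + 2 * pi} (\<lambda>x. teval Tl x * teval ((tder ^^ q) vl) x)
       = (-1)^q * integral {aa..aa + 2 * pi} (\<lambda>x. teval ((tder ^^ q) Tl) x * teval vl x)"
proof -
  have pT: "per (teval Tl)" using teval_period[OF assms(1)] by (simp add: per_def)
  have "integral {aa..aa + 2 * pi} (\<lambda>x. (\<lambda>j. teval ((tder ^^ j) Tl)) 0 x * (\<lambda>j. teval ((tder ^^ j) vl)) q x)
       = (-1)^q * integral {aa..aa + 2 * pi} (\<lambda>x. (\<lambda>j. teval ((tder ^^ j) Tl)) q x * (\<lambda>j. teval ((tder ^^ j) vl)) 0 x)"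
  proof (rule ibp_chain)
    show "\<And>j x. j < q \<Longrightarrow> (teval ((tder ^^ j) Tl) has_real_derivative teval ((tder ^^ Suc j) Tl) x) (at x)"
      using teval_deriv by simp
    show "\<And>j x. j < q \<Longrightarrow> (teval ((tder ^^ j) vl) has_real_derivative teval ((tder ^^ Suc j) vl) x) (at x)"
      using teval_deriv by simp
    show "\<And>j. j \<le> q \<Longrightarrow> per (teval ((tder ^^ j) Tl))" using per_tder[OF pT] by simp
    show "\<And>j. j \<le> q \<Longrightarrow> per (teval ((tder ^^ j) vl))" using per_tder[OF assms(2)] by simp
  qed (auto intro: teval_cont)
  then show ?thesis by simp
qed

lemma ibp_f:
  assumes "per (teval vl)"
  shows "integral {aa..aa + 2 * pi} (\<lambda>x. ff x * teval ((tder ^^ q) vl) x)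
       = (-1)^q * integral {aa..aa + 2 * pi} (\<lambda>x. FF x * teval (tder (tder vl)) x)"
proof -
  define U where "U j = Pk aa FF (q - 2 - j)" for j
  define V where "V j = teval ((tder ^^ (j + 2)) vl)" for j
  have "integral {aa..aa + 2 * pi} (\<lambda>x. U 0 x * V (q - 2) x) = (-1)^(q - 2) * integral {aa..aa + 2 * pi} (\<lambda>x. U (q - 2) x * V 0 x)"
  proof (rule ibp_chain)
    show "(U j has_real_derivative U (Suc j) x) (at x)" if "j < q - 2" for j x
    proof -
      have "q - 2 - j = Suc (q - 2 - Suc j)" using that by simp
      then show ?thesis unfolding U_def using Pk_deriv[OF FF3, of "q - 2 - Suc j" x] by simp
    qed
    show "(V j has_real_derivative V (Suc j) x) (at x)" for j x
      unfolding V_def using teval_deriv by simp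
    show "continuous_on UNIV (U j)" for j unfolding U_def using Pk_props[OF FF3] by blast
    show "continuous_on UNIV (V j)" for j unfolding V_def by (rule teval_cont)
    show "per (U j)" for j unfolding U_def using Pk_props[OF FF3] by blast
    show "per (V j)" for j unfolding V_def using per_tder[OF assms] by blast
  qed
  moreover have "U 0 = ff" by (simp add: U_def ff_def)
  moreover have "V (q - 2) = teval ((tder ^^ q) vl)"
  proof -
    have "q - 2 + 2 = q" using q3 by simp
    then show ?thesis by (simp only: V_def)
  qed
  moreover have "U (q - 2) = FF" by (simp add: U_def)
  moreover have "V 0 = teval (tder (tder vl))" by (simp add: V_def numeral_2_eq_2)
  moreover have "(-1::real)^(q - 2) = (-1)^q"
  proof -
    have "q = (q - 2) + 2" using q3 by simp
    then have "(-1::real)^q = (-1)^(q - 2) * (-1)^2" by (metis power_add)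
    then show ?thesis by simp
  qed
  ultimately show ?thesis by simp
qed

definition kappa :: real where "kappa = L2 * (1 - cos L1) / 4 + L1 * (1 - cos L2) / 4"

lemma one_minus_cos_pos: "0 < L \<Longrightarrow> L < 2 * pi \<Longrightarrow> 1 - cos L > 0"
proof -
  assume L: "0 < L" "L < 2 * pi"
  have "sin (L / 2) > 0" using L by (intro sin_gt_zero) auto
  moreover have "cos L = 1 - 2 * (sin (L / 2))^2" using cos_double_sin[of "L / 2"] by simp
  ultimately show ?thesis by simp
qed

lemma kappa_pos: "kappa > 0"
proof -
  have "L1 < 2 * pi" "L2 < 2 * pi" using L12 by auto
  then have "1 - cos L1 > 0" "1 - cos L2 > 0" using L12 one_minus_cos_pos by auto
  then show ?thesis unfolding kappa_def using L12 by (simp add: add_pos_pos)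
qed

lemma kappa_eq: "(-1)^q * integral {aa..aa + 2 * pi} (\<lambda>x. ff x * teval ((tder ^^ q) phil) x) = kappa"
proof -
  have pphi: "per (teval phil)" using teval_period[OF phil_int] by (simp add: per_def)
  have "(-1)^q * integral {aa..aa + 2 * pi} (\<lambda>x. ff x * teval ((tder ^^ q) phil) x)
      = ((-1)^q * (-1)^q) * integral {aa..aa + 2 * pi} (\<lambda>x. FF x * teval (tder (tder phil)) x)"
    by (simp add: ibp_f[OF pphi])
  also have "((-1::real)^q * (-1)^q) = 1" by (simp add: power_mult_distrib[symmetric])
  also have "integral {aa..aa + 2 * pi} (\<lambda>x. FF x * teval (tder (tder phil)) x)
      = - (\<Sum>i=1..2 * s. alpha i * (teval phil (y (i - 1)) - teval phil (y i)))"
    by (rule pw[OF pphi])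
  also have "(\<Sum>i=1..2 * s. alpha i * (teval phil (y (i - 1)) - teval phil (y i)))
      = (\<Sum>i\<in>{1,2}. alpha i * (teval phil (y (i - 1)) - teval phil (y i)))"
    by (rule sum.mono_neutral_right) (use s1 in \<open>auto simp: alpha_def\<close>)
  also have "\<dots> = - kappa"
  proof -
    have e: "y 2 - y 1 = - L2" by (simp add: L2_def)
    have "cos (y 2 - y 1) = cos L2" unfolding e by (rule cos_minus)
    then have p2: "teval phil (y 2) = - cos L2" by (simp add: phi_eval)
    have p0: "teval phil (y 0) = - cos L1" by (simp add: phi_eval L1_def)
    have p1: "teval phil (y 1) = - 1" by (simp add: phi_eval)
    show ?thesis using p0 p1 p2 by (simp add: alpha_def kappa_def field_simps)
  qed
  finally show ?thesis by simp
qed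

lemma Lambda_f: "integral {aa..aa + 2 * pi} (\<lambda>x. ff x * teval ((tder ^^ q) gl) x) = 0"
proof -
  have "integral {aa..aa + 2 * pi} (\<lambda>x. FF x * teval (tder (tder gl)) x)
      = - (\<Sum>i=1..2 * s. alpha i * (teval gl (y (i - 1)) - teval gl (y i)))"
    by (rule pw[OF gl_per])
  also have "\<dots> = 0"
  proof -
    have "\<forall>i\<in>{1..2 * s}. alpha i * (teval gl (y (i - 1)) - teval gl (y i)) = 0"
      using g_zero by (auto simp: teval_gl)
    then have "(\<Sum>i=1..2 * s. alpha i * (teval gl (y (i - 1)) - teval gl (y i))) = 0" by (rule sum.neutral)
    then show ?thesis by simp
  qed
  finally show ?thesis by (simp add: ibp_f[OF gl_per])
qed

end

lemma neg1pow_le: "(-1::real)^q * X \<le> \<bar>X\<bar>"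
  by (cases "even q") auto

lemma diff_bound:
  fixes u G :: "real \<Rightarrow> real"
  assumes cu: "continuous_on UNIV u" and cG: "continuous_on UNIV G" and b: "\<And>x. \<bar>u x\<bar> \<le> e"
  shows "\<bar>integral {p..r} (\<lambda>x. u x * G x)\<bar> \<le> e * integral {p..r} (\<lambda>x. \<bar>G x\<bar>)"
proof -
  have "\<bar>integral {p..r} (\<lambda>x. u x * G x)\<bar> \<le> integral {p..r} (\<lambda>x. e * \<bar>G x\<bar>)"
  proof (rule int_abs_le)
    show "(\<lambda>x. u x * G x) integrable_on {p..r}"
      by (intro integrable_continuous_interval continuous_intros continuous_on_subset[OF cu] continuous_on_subset[OF cG]) auto
    show "(\<lambda>x. e * \<bar>G x\<bar>) integrable_on {p..r}"
      by (intro integrable_continuous_interval continuous_intros continuous_on_subset[OF cG]) auto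
    show "\<bar>u x * G x\<bar> \<le> e * \<bar>G x\<bar>" for x by (simp add: abs_mult mult_right_mono b)
  qed
  then show ?thesis by simp
qed

context ptsq begin

lemma ff_cont: "continuous_on UNIV ff" and ff_per: "per ff"
  using Pk_props[OF FF3, of "q - 2"] by (auto simp: ff_def)

lemma ff_Delta: "ff \<in> Delta_q q s y"
  unfolding Delta_q_def
proof (intro CollectI conjI allI impI)
  show "continuous_on UNIV ff" by (rule ff_cont)
  show "periodic2pi ff" using ff_per by (simp add: per_def periodic2pi_def)
  fix i assume i: "1 \<le> i \<and> i \<le> 2 * s"
  define c :: real where "c = (-1)^(i - 1)"
  define G where "G j = (\<lambda>x. c * Pk aa FF (q - 2 - j) x)" for j
  show "q_monotone q (\<lambda>x. (-1)^(i - 1) * ff x) (y i) (y (i - 1))"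
    unfolding q_monotone_def
  proof (intro conjI exI[of _ G])
    show "continuous_on {y i..y (i - 1)} (\<lambda>x. (-1)^(i - 1) * ff x)"
      by (intro continuous_intros continuous_on_subset[OF ff_cont]) auto
    show "deriv_chain (q - 2) G (\<lambda>x. (-1)^(i - 1) * ff x) {y i<..<y (i - 1)}"
      unfolding deriv_chain_def
    proof (intro conjI allI impI ballI)
      show "G 0 = (\<lambda>x. (-1)^(i - 1) * ff x)" by (simp add: G_def c_def ff_def)
      fix j x assume j: "j < q - 2"
      have "q - 2 - j = Suc (q - 2 - Suc j)" using j by simp
      then show "(G j has_real_derivative G (Suc j) x) (at x)"
        unfolding G_def using Pk_deriv[OF FF3, of "q - 2 - Suc j" x] by (auto intro!: DERIV_cmult)
    qed
    show "\<forall>j\<le>q - 2. continuous_on {y i<..<y (i - 1)} (G j)"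
      unfolding G_def using Pk_props[OF FF3] by (auto intro!: continuous_intros intro: continuous_on_subset)
    have "convex_on {y i<..<y (i - 1)} (\<lambda>x. (c * alpha i) * x + c * beta i)" by (rule affine_convex) auto
    then show "convex_on {y i<..<y (i - 1)} (G (q - 2))"
    proof (rule convex_on_cong')
      fix x assume "x \<in> {y i<..<y (i - 1)}"
      then have "FF x = alpha i * x + beta i" using i by (intro FF_arc) auto
      then show "c * alpha i * x + c * beta i = G (q - 2) x" by (simp add: G_def algebra_simps)
    qed
  qed
qed

lemma ff_W: "ff \<in> W_class (q - 1)"
  unfolding W_class_def
proof (intro CollectI conjI exI[of _ "\<lambda>j. Pk aa FF (q - 2 - j)"])
  show "periodic2pi ff" using ff_per by (simp add: per_def periodic2pi_def)
  have e: "q - 1 - 1 = q - 2" by simp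
  show "deriv_chain (q - 1 - 1) (\<lambda>j. Pk aa FF (q - 2 - j)) ff UNIV"
    unfolding deriv_chain_def e
  proof (intro conjI allI impI ballI)
    show "Pk aa FF (q - 2 - 0) = ff" by (simp add: ff_def)
    fix j x assume j: "j < q - 2"
    have "q - 2 - j = Suc (q - 2 - Suc j)" using j by simp
    then show "(Pk aa FF (q - 2 - j) has_real_derivative Pk aa FF (q - 2 - Suc j) x) (at x)"
      using Pk_deriv[OF FF3, of "q - 2 - Suc j" x] by simp
  qed
  show "loc_abs_cont (Pk aa FF (q - 2 - (q - 1 - 1)))" using FF_lac by (simp add: e)
  show "AE x in lborel. \<exists>D. (Pk aa FF (q - 2 - (q - 1 - 1)) has_real_derivative D) (at x) \<and> \<bar>D\<bar> \<le> 2"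
    using FF_ae by (simp add: e)
qed

lemma per_bounded:
  fixes h :: "real \<Rightarrow> real"
  assumes ch: "continuous_on UNIV h" and ph: "per h"
  shows "\<exists>M. \<forall>x. \<bar>h x\<bar> \<le> M"
proof -
  have "compact (h ` {aa..aa + 2 * pi})" by (intro compact_continuous_image continuous_on_subset[OF ch]) auto
  then obtain M where M: "\<forall>v\<in>h ` {aa..aa + 2 * pi}. norm v \<le> M" using compact_imp_bounded bounded_iff by metis
  have "\<bar>h x\<bar> \<le> M" for x
  proof -
    define k where "k = \<lfloor>(x - aa) / (2 * pi)\<rfloor>"
    define t where "t = x - 2 * pi * of_int k"
    have tr: "aa \<le> t" "t < aa + 2 * pi" using in_cell[of x] unfolding t_def k_def by (simp_all add: algebra_simps)
    have "h x = h t" using per_int[OF ph, of t k] by (simp add: t_def)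
    then show ?thesis using M tr by auto
  qed
  then show ?thesis by blast
qed

lemma le_supnorm:
  fixes h :: "real \<Rightarrow> real"
  assumes ch: "continuous_on UNIV h" and ph: "per h"
  shows "\<bar>h x\<bar> \<le> supnorm h"
proof -
  obtain M where M: "\<forall>x. \<bar>h x\<bar> \<le> M" using per_bounded[OF assms] by blast
  have "bdd_above (range (\<lambda>x. \<bar>h x\<bar>))" using M by (auto intro: bdd_aboveI)
  then show ?thesis unfolding supnorm_def by (intro cSUP_upper) auto
qed

definition AP :: real where "AP = integral {aa..aa + 2 * pi} (\<lambda>x. \<bar>teval ((tder ^^ q) phil) x\<bar>)"
definition AG :: real where "AG = integral {aa..aa + 2 * pi} (\<lambda>x. \<bar>teval ((tder ^^ q) gl) x\<bar>)"
definition Cc :: real where "Cc = kappa / (AP + 4 * AG / (cg * eta1) + 1)"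

lemma AP_AG: "AP \<ge> 0" "AG \<ge> 0"
  unfolding AP_def AG_def by (auto intro!: integral_nonneg integrable_continuous_interval continuous_intros teval_cont)

lemma Cc_pos: "Cc > 0"
proof -
  have "AP + 4 * AG / (cg * eta1) + 1 > 0" using AP_AG cg_pos eta1 by (intro add_nonneg_pos) auto
  then show ?thesis unfolding Cc_def using kappa_pos by simp
qed

lemma main_bound:
  assumes n: "n \<ge> 1" and tp: "trig_poly n T" and TD: "T \<in> Delta_q q s y"
  shows "real n * supnorm (\<lambda>x. ff x - T x) \<ge> Cc"
proof -
  obtain Tl where Tl: "intfreq n Tl" "\<And>x. T x = teval Tl x" using trig_to_list[OF tp] by blast
  define Wl where "Wl = (tder ^^ q) Tl"
  define w where "w = teval Wl"
  have Wi: "intfreq n Wl" unfolding Wl_def by (rule intfreq_tder[OF Tl(1)])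
  have cw: "continuous_on UNIV w" unfolding w_def by (rule teval_cont)
  have pw': "per w" unfolding w_def using teval_period[OF Wi] by (simp add: per_def)
  have Hs: "\<And>i x. 1 \<le> i \<Longrightarrow> i \<le> 2 * s \<Longrightarrow> y i < x \<Longrightarrow> x < y (i - 1) \<Longrightarrow> (-1)^(i - 1) * w x \<ge> 0"
    unfolding w_def Wl_def using T_sign[OF q3 TD Tl(2)] by blast
  have wg: "\<And>x. y (2 * s) \<le> x \<Longrightarrow> x \<le> y 0 \<Longrightarrow> teval Wl x * g x \<ge> 0"
    using wg_nonneg[of w, OF Hs] unfolding w_def by blast
  have wz: "\<And>j. j \<le> 2 * s \<Longrightarrow> teval Wl (y j) = 0"
    using w_zero[of w, OF Hs cw pw'] unfolding w_def by blast
  have estI: "integral {aa..aa + 2 * pi} (\<lambda>x. \<bar>w x\<bar>) \<le> 4 * real n / (cg * eta1) * integral {aa..aa + 2 * pi} (\<lambda>x. w x * g x)"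
    using est[OF n Wi wg wz] unfolding w_def yq by simp
  define e where "e = supnorm (\<lambda>x. ff x - T x)"
  have cT: "continuous_on UNIV T" unfolding Tl(2)[abs_def] by (rule teval_cont)
  have pT: "per T" unfolding Tl(2)[abs_def] using teval_period[OF Tl(1)] by (simp add: per_def)
  have cd: "continuous_on UNIV (\<lambda>x. ff x - T x)" by (intro continuous_intros ff_cont cT)
  have pd: "per (\<lambda>x. ff x - T x)" using ff_per pT by (simp add: per_def)
  have eb: "\<bar>T x - ff x\<bar> \<le> e" for x using le_supnorm[OF cd pd, of x] by (simp add: e_def abs_minus_commute)
  have e0: "e \<ge> 0" using eb[of 0] by linarith
  have cTf: "continuous_on UNIV (\<lambda>x. T x - ff x)" by (intro continuous_intros ff_cont cT)
  let ?J = "{aa..aa + 2 * pi}"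
  have intg: "(\<lambda>x. u x * teval vl x) integrable_on ?J" if "continuous_on UNIV u" for u vl
    by (intro integrable_continuous_interval continuous_intros continuous_on_subset[OF that] teval_cont) auto
  have split: "integral ?J (\<lambda>x. T x * teval vl x) - integral ?J (\<lambda>x. ff x * teval vl x) = integral ?J (\<lambda>x. (T x - ff x) * teval vl x)" for vl
  proof -
    have "integral ?J (\<lambda>x. T x * teval vl x - ff x * teval vl x) = integral ?J (\<lambda>x. T x * teval vl x) - integral ?J (\<lambda>x. ff x * teval vl x)"
      by (rule integral_diff) (auto intro: intg cT ff_cont)
    then show ?thesis by (simp add: algebra_simps)
  qed
  have sq: "((-1::real)^q) * (-1)^q = 1" by (simp add: power_mult_distrib[symmetric])
  have ib: "integral ?J (\<lambda>x. T x * teval ((tder ^^ q) gl) x) = (-1)^q * integral ?J (\<lambda>x. w x * teval gl x)"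
    unfolding w_def Wl_def Tl(2) by (rule ibp_T[OF Tl(1) gl_per])
  have La: "integral ?J (\<lambda>x. w x * g x) = (-1)^q * integral ?J (\<lambda>x. (T x - ff x) * teval ((tder ^^ q) gl) x)"
  proof -
    have "integral ?J (\<lambda>x. w x * g x) = ((-1)^q * (-1)^q) * integral ?J (\<lambda>x. w x * g x)" using sq by simp
    also have "\<dots> = (-1)^q * ((-1)^q * integral ?J (\<lambda>x. w x * teval gl x))" by (simp add: teval_gl)
    also have "(-1)^q * integral ?J (\<lambda>x. w x * teval gl x) = integral ?J (\<lambda>x. T x * teval ((tder ^^ q) gl) x)"
      using ib by simp
    also have "\<dots> = integral ?J (\<lambda>x. (T x - ff x) * teval ((tder ^^ q) gl) x)"
      using split[of "(tder ^^ q) gl"] Lambda_f by simp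
    finally show ?thesis .
  qed
  have "integral ?J (\<lambda>x. w x * g x) \<le> e * AG"
  proof -
    have "integral ?J (\<lambda>x. w x * g x) \<le> \<bar>integral ?J (\<lambda>x. (T x - ff x) * teval ((tder ^^ q) gl) x)\<bar>"
      unfolding La by (rule neg1pow_le)
    also have "\<dots> \<le> e * AG" unfolding AG_def by (rule diff_bound[OF cTf teval_cont eb])
    finally show ?thesis .
  qed
  moreover have "integral ?J (\<lambda>x. w x * teval phil x) \<ge> kappa - e * AP"
  proof -
    have ibT: "integral ?J (\<lambda>x. T x * teval ((tder ^^ q) phil) x) = (-1)^q * integral ?J (\<lambda>x. w x * teval phil x)"
      unfolding w_def Wl_def Tl(2) by (rule ibp_T[OF Tl(1)]) (use teval_period[OF phil_int] in \<open>simp add: per_def\<close>)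
    have "integral ?J (\<lambda>x. w x * teval phil x) = ((-1)^q * (-1)^q) * integral ?J (\<lambda>x. w x * teval phil x)"
      using sq by simp
    also have "\<dots> = (-1)^q * ((-1)^q * integral ?J (\<lambda>x. w x * teval phil x))" by simp
    also have "(-1)^q * integral ?J (\<lambda>x. w x * teval phil x) = integral ?J (\<lambda>x. T x * teval ((tder ^^ q) phil) x)"
      using ibT by simp
    finally have "integral ?J (\<lambda>x. w x * teval phil x) = (-1)^q * integral ?J (\<lambda>x. T x * teval ((tder ^^ q) phil) x)" .
    also have "\<dots> = (-1)^q * integral ?J (\<lambda>x. ff x * teval ((tder ^^ q) phil) x) + (-1)^q * integral ?J (\<lambda>x. (T x - ff x) * teval ((tder ^^ q) phil) x)"
      using split[of "(tder ^^ q) phil"] by (simp add: algebra_simps)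
    also have "(-1)^q * integral ?J (\<lambda>x. ff x * teval ((tder ^^ q) phil) x) = kappa" by (rule kappa_eq)
    finally have eq: "integral ?J (\<lambda>x. w x * teval phil x) = kappa + (-1)^q * integral ?J (\<lambda>x. (T x - ff x) * teval ((tder ^^ q) phil) x)" .
    have "\<bar>(-1)^q * integral ?J (\<lambda>x. (T x - ff x) * teval ((tder ^^ q) phil) x)\<bar> \<le> e * AP"
      unfolding AP_def by (simp add: abs_mult) (rule diff_bound[OF cTf teval_cont eb])
    then show ?thesis unfolding eq by linarith
  qed
  moreover have "integral ?J (\<lambda>x. w x * teval phil x) \<le> integral ?J (\<lambda>x. \<bar>w x\<bar>)"
  proof (rule integral_le)
    show "w x * teval phil x \<le> \<bar>w x\<bar>" for x
    proof -
      have "w x * teval phil x \<le> \<bar>w x\<bar> * \<bar>teval phil x\<bar>" by (simp add: abs_mult[symmetric])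
      also have "\<dots> \<le> \<bar>w x\<bar> * 1" by (intro mult_left_mono phi_bound) auto
      finally show ?thesis by simp
    qed
  qed (auto intro!: integrable_continuous_interval continuous_intros cw teval_cont intro: continuous_on_subset)
  ultimately have k0: "kappa - e * AP \<le> 4 * real n / (cg * eta1) * integral ?J (\<lambda>x. w x * g x)"
    using estI by linarith
  have "4 * real n / (cg * eta1) * integral ?J (\<lambda>x. w x * g x) \<le> 4 * real n / (cg * eta1) * (e * AG)"
    using \<open>integral ?J (\<lambda>x. w x * g x) \<le> e * AG\<close> cg_pos eta1 by (intro mult_left_mono) auto
  with k0 have k1: "kappa - e * AP \<le> 4 * real n / (cg * eta1) * (e * AG)" by linarith
  have "kappa \<le> e * (AP + 4 * real n * AG / (cg * eta1))" using k1 by (simp add: field_simps)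
  also have "\<dots> \<le> e * (real n * (AP + 4 * AG / (cg * eta1) + 1))"
  proof (intro mult_left_mono e0)
    have "AP \<le> real n * AP" using n AP_AG by (simp add: mult_le_cancel_right1)
    moreover have "real n * AG / (cg * eta1) = real n * (AG / (cg * eta1))" by simp
    ultimately show "AP + 4 * real n * AG / (cg * eta1) \<le> real n * (AP + 4 * AG / (cg * eta1) + 1)"
      using n by (simp add: algebra_simps)
  qed
  finally have "kappa \<le> real n * e * (AP + 4 * AG / (cg * eta1) + 1)" by (simp add: algebra_simps)
  moreover have "AP + 4 * AG / (cg * eta1) + 1 > 0" using AP_AG cg_pos eta1 by (intro add_nonneg_pos) auto
  ultimately show ?thesis unfolding Cc_def e_def by (simp add: divide_le_eq)
qed

lemma zero_Delta: "(\<lambda>x. 0) \<in> Delta_q q s y"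
  unfolding Delta_q_def q_monotone_def deriv_chain_def periodic2pi_def
  by (auto intro!: exI[of _ "\<lambda>j x. 0"] simp: convex_on_const convex_real_interval)

lemma zero_trig: "trig_poly n (\<lambda>x. 0)"
  unfolding trig_poly_def by (intro exI[of _ "\<lambda>k. 0"]) simp

lemma final_bound: "n \<ge> 1 \<Longrightarrow> real n * E_nq n q s y ff \<ge> Cc"
proof -
  assume n: "n \<ge> 1"
  define S where "S = {supnorm (\<lambda>x. ff x - T x) | T. trig_poly n T \<and> T \<in> Delta_q q s y}"
  have ne: "S \<noteq> {}" unfolding S_def using zero_trig zero_Delta by blast
  have lb: "Cc / real n \<le> v" if "v \<in> S" for v
  proof -
    from that obtain T where T: "v = supnorm (\<lambda>x. ff x - T x)" "trig_poly n T" "T \<in> Delta_q q s y"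
      unfolding S_def by blast
    have "real n * v \<ge> Cc" using main_bound[OF n T(2,3)] T(1) by simp
    then show ?thesis using n by (simp add: divide_le_eq mult.commute)
  qed
  have "Cc / real n \<le> Inf S" by (rule cInf_greatest[OF ne lb])
  then have "Cc \<le> real n * Inf S" using n by (simp add: divide_le_eq mult.commute)
  then show ?thesis unfolding E_nq_def S_def .
qed

end


theorem theorem1p5:
  fixes q s :: nat and y :: "nat \<Rightarrow> real"
  assumes "q \<ge> 3" and "s \<ge> 1"
    and "\<forall>i<2 * s. y (Suc i) < y i"
    and "y 0 = y (2 * s) + 2 * pi"
  shows "\<exists>f \<in> Delta_q q s y \<inter> W_class (q - 1). \<exists>C>0.
           \<forall>n::nat. n \<ge> 1 \<longrightarrow> real n * E_nq n q s y f \<ge> C"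
proof -
  interpret ptsq s y q
    by unfold_locales (use assms in auto)
  show ?thesis
  proof (intro bexI[of _ ff] exI[of _ Cc] conjI allI impI)
    show "Cc > 0" by (rule Cc_pos)
    fix n :: nat assume "n \<ge> 1"
    then show "real n * E_nq n q s y ff \<ge> Cc" by (rule final_bound)
  next
    show "ff \<in> Delta_q q s y \<inter> W_class (q - 1)" using ff_Delta ff_W by blast
  qed
qed

end
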